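(* Let $F$ be a closed $\mathfrak{sl}_N$-foam and let $c,c'$ be two colorings of $F$ related by a Kempe move relative to the pigments $1$ and $2$. Then for every pigment $k\ge 3$, $$\theta^+_{1k}(F,c)+\theta^+_{2k}(F,c)\equiv\theta^+_{1k}(F,c')+\theta^+_{2k}(F,c')\pmod 2.$$
   Context: Fix $N\ge1$, pigments $\mathbb{P}=\{1,\dots,N\}$ with natural order. An $\mathfrak{sl}_N$-foam is obtained by gluing along their boundaries finitely many facets (compact connected oriented surfaces with boundary) labelled by $\{0,\dots,N\}$, locally modelled on: a disc in a facet; three facets labelled $a,b,a+b$ meeting along an oriented arc (a binding), whose orientation agrees with the boundary orientation of the facets labelled $a,b$ and disagrees with that of the facet labelled $a+b$, and which carries a cyclic ordering of its three facets; or a singular point (cone over the 1-skeleton of a tetrahedron) where six facets labelled $a,b,c,a+b,b+c,a+b+c$ meet along four bindings, with compatible cyclic orderings. Closed means compact without boundary. A coloring $c$ assigns to each facet $f$ a subset $c(f)\subseteq\mathbb{P}$ of cardinality the label of $f$, such that at each binding with facets labelled $a,b,a+b$ the colors of the first two have union equal to the color of the third. $F_i(c)$ is the closed surface formed by the facets whose color contains $i$; $F_{ij}(c)$ is the closed surface formed by facets whose color contains exactly one of $i,j$. For $i<j$, a binding with facets $f_1,f_2,f_3$ with $i\in c(f_1)$, $j\in c(f_2)$, $\{i,j\}\subseteq c(f_3)$ is positive w.r.t. $(i,j)$ if its cyclic order is $(f_1,f_2,f_3)$ and negative otherwise; $F_i(c)\cap F_j(c)\cap F_{ij}(c)$ is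 a disjoint union of circles each consisting entirely of positive or entirely of negative bindings; $\theta^+_{ij}(F,c)$ denotes the number of positive such circles. A Kempe move relative to $i$ and $j$ along $\Sigma$: given a coloring $c$ and a closed subsurface $\Sigma$ of $F_{ij}(c)$ (a union of connected components), the coloring $c'$ is obtained from $c$ by exchanging the pigments $i$ and $j$ in the colors of all facets contained in $\Sigma$ (and leaving all other facets unchanged). *)

theory Defs
  imports Main
begin

text \<open>Facets are identifiers of type 'f with labels; bindings (edges of the singular graph)
  are of type 'b; singular points of type 'v.
  For a binding b, the three facets glued along b are stored IN THEIR CYCLIC ORDER as
  (sm1 b, sm2 b, big b), where sm1 b, sm2 b are the facets labelled a, b and big b the
  facet labelled a+b.  circ b says that b is a closed circle without singular points;
  otherwise b is an oriented arc with a tail end (b,False) and a head end (b,True).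
  slot v i (i = 1..4) gives the four binding ends meeting at the singular point v, in the
  positions of the standard model: bindings (a,b,a+b), (a+b,c,a+b+c), (b,c,b+c),
  (a,b+c,a+b+c).\<close>

record ('f,'b,'v) foam =
  facets :: "'f set"
  lab :: "'f \<Rightarrow> nat"
  bindings :: "'b set"
  sm1 :: "'b \<Rightarrow> 'f"
  sm2 :: "'b \<Rightarrow> 'f"
  big :: "'b \<Rightarrow> 'f"
  circ :: "'b \<Rightarrow> bool"
  verts :: "'v set"
  slot :: "'v \<Rightarrow> nat \<Rightarrow> 'b \<times> bool"

definition sheets :: "('f,'b,'v) foam \<Rightarrow> 'b \<Rightarrow> 'f set" where
  "sheets F b = {sm1 F b, sm2 F b, big F b}"

text \<open>Local model at a singular point, with compatible cyclic orderings and orientations: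
  facets fa = sm1 b1, fb = sm2 b1, fab = big b1, fc = sm2 b2, fabc = big b2, fbc = big b3,
  and bindings b1=(fa,fb,fab), b2=(fab,fc,fabc), b3=(fb,fc,fbc), b4=(fa,fbc,fabc) (all with
  the stored cyclic order); b1,b2 point in the same direction w.r.t. v, b3,b4 in the other.\<close>
definition singular_point_ok :: "('f,'b,'v) foam \<Rightarrow> 'v \<Rightarrow> bool" where
  "singular_point_ok F v \<longleftrightarrow>
     (let b1 = fst (slot F v 1); b2 = fst (slot F v 2);
          b3 = fst (slot F v 3); b4 = fst (slot F v 4) in
        sm1 F b2 = big F b1 \<and> sm1 F b3 = sm2 F b1 \<and> sm2 F b3 = sm2 F b2 \<and>
        sm1 F b4 = sm1 F b1 \<and> sm2 F b4 = big F b3 \<and> big F b4 = big F b2 \<and>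
        snd (slot F v 1) = snd (slot F v 2) \<and> snd (slot F v 3) = snd (slot F v 4) \<and>
        snd (slot F v 1) \<noteq> snd (slot F v 3))"

definition is_closed_foam :: "nat \<Rightarrow> ('f,'b,'v) foam \<Rightarrow> bool" where
  "is_closed_foam N F \<longleftrightarrow>
     1 \<le> N \<and> finite (facets F) \<and> finite (bindings F) \<and> finite (verts F) \<and>
     (\<forall>f\<in>facets F. lab F f \<le> N) \<and>
     (\<forall>b\<in>bindings F. sheets F b \<subseteq> facets F \<and>
         lab F (big F b) = lab F (sm1 F b) + lab F (sm2 F b)) \<and>
     bij_betw (\<lambda>(v,i). slot F v i) (verts F \<times> {1..4})
              ({b\<in>bindings F. \<not> circ F b} \<times> UNIV) \<and>
     (\<forall>v\<in>verts F. singular_point_ok F v)"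

definition coloring :: "nat \<Rightarrow> ('f,'b,'v) foam \<Rightarrow> ('f \<Rightarrow> nat set) \<Rightarrow> bool" where
  "coloring N F c \<longleftrightarrow>
     (\<forall>f\<in>facets F. c f \<subseteq> {1..N} \<and> card (c f) = lab F f) \<and>
     (\<forall>b\<in>bindings F. c (sm1 F b) \<union> c (sm2 F b) = c (big F b))"

definition in_Fi :: "('f \<Rightarrow> nat set) \<Rightarrow> nat \<Rightarrow> 'f \<Rightarrow> bool" where
  "in_Fi c i f \<longleftrightarrow> i \<in> c f"

definition in_Fij :: "('f \<Rightarrow> nat set) \<Rightarrow> nat \<Rightarrow> nat \<Rightarrow> 'f \<Rightarrow> bool" where
  "in_Fij c i j f \<longleftrightarrow> (i \<in> c f) \<noteq> (j \<in> c f)"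

text \<open>A binding lies in F_i(c) \<inter> F_j(c) \<inter> F_ij(c) (it lies in a surface iff one of its sheets does).\<close>
definition triple_binding :: "('f,'b,'v) foam \<Rightarrow> ('f \<Rightarrow> nat set) \<Rightarrow> nat \<Rightarrow> nat \<Rightarrow> 'b \<Rightarrow> bool" where
  "triple_binding F c i j b \<longleftrightarrow> b \<in> bindings F \<and>
     (\<exists>f\<in>sheets F b. in_Fi c i f) \<and> (\<exists>f\<in>sheets F b. in_Fi c j f) \<and>
     (\<exists>f\<in>sheets F b. in_Fij c i j f)"

text \<open>Positive w.r.t. (i,j), i<j: the facet containing i, the facet containing j and the facet
  containing both are in the cyclic order of the binding.\<close>
definition positive_binding :: "('f,'b,'v) foam \<Rightarrow> ('f \<Rightarrow> nat set) \<Rightarrow> nat \<Rightarrow> nat \<Rightarrow> 'b \<Rightarrow> bool" where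
  "positive_binding F c i j b \<longleftrightarrow>
     i \<in> c (sm1 F b) \<and> j \<in> c (sm2 F b) \<and> {i, j} \<subseteq> c (big F b)"

definition touches :: "('f,'b,'v) foam \<Rightarrow> 'v \<Rightarrow> 'b \<Rightarrow> bool" where
  "touches F v b \<longleftrightarrow> (\<exists>i\<in>{1..4::nat}. fst (slot F v i) = b)"

definition triple_adj :: "('f,'b,'v) foam \<Rightarrow> ('f \<Rightarrow> nat set) \<Rightarrow> nat \<Rightarrow> nat \<Rightarrow> ('b \<times> 'b) set" where
  "triple_adj F c i j = {(b, b'). triple_binding F c i j b \<and> triple_binding F c i j b' \<and>
       (\<exists>v\<in>verts F. touches F v b \<and> touches F v b')}"

text \<open>The circles of F_i(c) \<inter> F_j(c) \<inter> F_ij(c): connected components of the graph of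
  bindings in this intersection, adjacent when they share a singular point.\<close>
definition triple_circles :: "('f,'b,'v) foam \<Rightarrow> ('f \<Rightarrow> nat set) \<Rightarrow> nat \<Rightarrow> nat \<Rightarrow> 'b set set" where
  "triple_circles F c i j =
     (\<lambda>b. (triple_adj F c i j)\<^sup>* `` {b}) ` {b. triple_binding F c i j b}"

definition theta_plus :: "('f,'b,'v) foam \<Rightarrow> ('f \<Rightarrow> nat set) \<Rightarrow> nat \<Rightarrow> nat \<Rightarrow> nat" where
  "theta_plus F c i j =
     card {C \<in> triple_circles F c i j. \<forall>b\<in>C. positive_binding F c i j b}"

text \<open>Closed subsurface of F_ij(c): a set of facets of F_ij(c) which is a union of connected
  components (closed under adjacency of F_ij-facets along bindings).\<close>
definition closed_subsurface :: "('f,'b,'v) foam \<Rightarrow> ('f \<Rightarrow> nat set) \<Rightarrow> nat \<Rightarrow> nat \<Rightarrow> 'f set \<Rightarrow> bool" where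
  "closed_subsurface F c i j S \<longleftrightarrow>
     S \<subseteq> {f \<in> facets F. in_Fij c i j f} \<and>
     (\<forall>b\<in>bindings F. \<forall>f\<in>sheets F b. \<forall>g\<in>sheets F b.
        f \<in> S \<and> in_Fij c i j g \<longrightarrow> g \<in> S)"

definition swap_pigments :: "nat \<Rightarrow> nat \<Rightarrow> nat set \<Rightarrow> nat set" where
  "swap_pigments i j X = (\<lambda>x. if x = i then j else if x = j then i else x) ` X"

definition kempe_move :: "('f \<Rightarrow> nat set) \<Rightarrow> nat \<Rightarrow> nat \<Rightarrow> 'f set \<Rightarrow> ('f \<Rightarrow> nat set)" where
  "kempe_move c i j S = (\<lambda>f. if f \<in> S then swap_pigments i j (c f) else c f)"

end

theory Submission
  imports Defs "HOL-Combinatorics.Permutations"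
begin

definition srel :: "'a set \<Rightarrow> ('a \<Rightarrow> 'a) \<Rightarrow> ('a \<times> 'a) set" where
  "srel A s = {(x, s x) | x. x \<in> A}"

lemma srel_iff: "(a, b) \<in> srel A s \<longleftrightarrow> a \<in> A \<and> b = s a"
  unfolding srel_def by blast

definition orel :: "'a set \<Rightarrow> ('a \<Rightarrow> 'a) \<Rightarrow> ('a \<times> 'a) set" where
  "orel A s = (srel A s \<union> (srel A s)\<inverse>)\<^sup>*"

definition ncyc :: "'a set \<Rightarrow> ('a \<Rightarrow> 'a) \<Rightarrow> nat" where
  "ncyc A s = card ((\<lambda>x. orel A s `` {x}) ` A)"

lemma sym_class_eq:
  assumes "sym Q" "(a, b) \<in> Q\<^sup>*"
  shows "Q\<^sup>* `` {a} = Q\<^sup>* `` {b}"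
proof -
  have s: "sym (Q\<^sup>*)" using assms(1) by (rule sym_rtrancl)
  have "(b, a) \<in> Q\<^sup>*" using s assms(2) by (meson symD)
  then show ?thesis using assms(2) by (auto intro: rtrancl_trans)
qed

lemma orel_sym: "sym (srel A s \<union> (srel A s)\<inverse>)"
  by (auto simp: sym_def)

lemma orel_class_eq:
  "(a, b) \<in> orel A s \<Longrightarrow> orel A s `` {a} = orel A s `` {b}"
  unfolding orel_def by (rule sym_class_eq[OF orel_sym])

lemma cx:
  assumes inj: "inj s" and x: "x \<in> A" "s x = x"
  shows "orel (A - {x}) s `` {x} = {x}"
  proof -
    let ?Q = "srel (A - {x}) s \<union> (srel (A - {x}) s)\<inverse>"
    have "y = x" if "(x, y) \<in> ?Q\<^sup>*" for y
      using that
    proof (induction rule: rtrancl_induct)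
      case base then show ?case by simp
    next
      case (step y z)
      have "(x, z) \<in> ?Q" using step by simp
      then have "z \<in> A - {x} \<and> s z = x" unfolding srel_def by blast
      then have False using x inj by (metis DiffD2 injD singletonI)
      then show ?case ..
    qed
    then show ?thesis unfolding orel_def by auto
  qed

lemma O1:
  assumes fin: "finite A" and p: "s permutes A" and x: "x \<in> A" "s x = x"
  shows "ncyc A s = Suc (ncyc (A - {x}) s)"
proof -
  let ?Q = "srel (A - {x}) s \<union> (srel (A - {x}) s)\<inverse>"
  have eqs: "srel A s = srel (A - {x}) s \<union> {(x,x)}"
    using x unfolding srel_def by auto
  have "orel A s = orel (A - {x}) s"
  proof -
    have "srel A s \<union> (srel A s)\<inverse> = ?Q \<union> {(x,x)}" using eqs by auto
    moreover have "(?Q \<union> {(x,x)})\<^sup>* = ?Q\<^sup>*"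
    proof
      show "(?Q \<union> {(x,x)})\<^sup>* \<subseteq> ?Q\<^sup>*"
        by (rule rtrancl_subset_rtrancl) auto
      show "?Q\<^sup>* \<subseteq> (?Q \<union> {(x,x)})\<^sup>*" by (rule rtrancl_mono) auto
    qed
    ultimately show ?thesis unfolding orel_def by simp
  qed
  note oeq = this
  have inj: "inj s" using p by (rule permutes_inj)
  have cx: "orel (A - {x}) s `` {x} = {x}" using cx[OF inj x] .
  let ?f = "\<lambda>y. orel (A - {x}) s `` {y}"
  have img: "(\<lambda>y. orel A s `` {y}) ` A = insert {x} (?f ` (A - {x}))"
  proof -
    have "A = insert x (A - {x})" using x by blast
    then have "(\<lambda>y. orel A s `` {y}) ` A = insert (orel A s `` {x}) ((\<lambda>y. orel A s `` {y}) ` (A - {x}))"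
      by (metis image_insert)
    then show ?thesis using cx oeq by simp
  qed
  have notin: "{x} \<notin> ?f ` (A - {x})"
  proof
    assume "{x} \<in> ?f ` (A - {x})"
    then obtain y where y: "y \<in> A - {x}" "?f y = {x}" by blast
    have "y \<in> ?f y" unfolding orel_def by auto
    then show False using y by auto
  qed
  have "finite (?f ` (A - {x}))" using fin by simp
  then have "card (insert {x} (?f ` (A - {x}))) = Suc (card (?f ` (A - {x})))"
    using notin by (rule card_insert_disjoint)
  then show ?thesis unfolding ncyc_def img by simp
qed


lemma O2:
  assumes fin: "finite A" and p: "s permutes A" and x: "x \<in> A" "s x \<noteq> x"
  defines "r \<equiv> transpose x (s x) \<circ> s"
  shows "ncyc A s = ncyc (A - {x}) r" and "r permutes (A - {x})"
proof -
  have inj: "inj s" using p by (rule permutes_inj)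
  have sxA: "s x \<in> A" using p x(1) by (simp add: permutes_in_image)
  obtain y0 where y0: "y0 \<in> A" "s y0 = x" using p x(1) permutes_image[OF p] by (metis imageE)
  have y0x: "y0 \<noteq> x" using y0 x by metis
  have rx: "r x = x" unfolding r_def by simp
  have ry0: "r y0 = s x" unfolding r_def using y0 by simp
  have rz: "r z = s z" if "z \<noteq> x" "z \<noteq> y0" for z
  proof -
    have "s z \<noteq> x" using that y0 inj by (metis injD)
    moreover have "s z \<noteq> s x" using that inj by (metis injD)
    ultimately show ?thesis unfolding r_def by (simp add: transpose_def)
  qed
  have rp: "r permutes A" unfolding r_def
    by (rule permutes_compose[OF p permutes_swap_id[OF x(1) sxA]])
  show rp': "r permutes (A - {x})"
    by (rule permutes_superset[OF rp]) (use rx in blast)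
  let ?Qs = "srel A s \<union> (srel A s)\<inverse>"
  let ?Qr = "srel (A - {x}) r \<union> (srel (A - {x}) r)\<inverse>"
  have symQs: "sym (?Qs\<^sup>*)" by (rule sym_rtrancl[OF orel_sym])
  have symQr: "sym (?Qr\<^sup>*)" by (rule sym_rtrancl[OF orel_sym])
  have c2a: "(z, r z) \<in> ?Qs\<^sup>*" if "z \<in> A - {x}" for z
  proof (cases "z = y0")
    case True
    have "(y0, x) \<in> ?Qs" using y0 by (simp add: srel_iff)
    moreover have "(x, s x) \<in> ?Qs" using x by (simp add: srel_iff)
    ultimately have "(y0, s x) \<in> ?Qs\<^sup>*" by (meson converse_rtrancl_into_rtrancl r_into_rtrancl)
    then show ?thesis using True ry0 by simp
  next
    case False
    then have "r z = s z" using that rz by blast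
    moreover have "(z, s z) \<in> ?Qs" using that by (simp add: srel_iff)
    ultimately show ?thesis by (metis r_into_rtrancl)
  qed
  have c2: "?Qr\<^sup>* \<subseteq> ?Qs\<^sup>*"
  proof -
    have "?Qr \<subseteq> ?Qs\<^sup>*"
    proof
      fix p assume "p \<in> ?Qr"
      then obtain a b where ab: "p = (a,b)" "(a,b) \<in> srel (A - {x}) r \<or> (b,a) \<in> srel (A - {x}) r"
        by (cases p) auto
      show "p \<in> ?Qs\<^sup>*"
      proof (cases "(a,b) \<in> srel (A - {x}) r")
        case True
        then show ?thesis using ab c2a by (auto simp: srel_iff)
      next
        case False
        then have "(b,a) \<in> srel (A - {x}) r" using ab by blast
        then have "(b,a) \<in> ?Qs\<^sup>*" using c2a by (auto simp: srel_iff)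
        then show ?thesis using symQs ab by (meson symD)
      qed
    qed
    then have "?Qr\<^sup>* \<subseteq> (?Qs\<^sup>*)\<^sup>*" by (rule rtrancl_mono)
    then show ?thesis by simp
  qed
  have c1: "(w \<noteq> x \<longrightarrow> (u,w) \<in> ?Qr\<^sup>*) \<and> (w = x \<longrightarrow> (u, s x) \<in> ?Qr\<^sup>*)"
    if u: "u \<in> A - {x}" and uw: "(u,w) \<in> ?Qs\<^sup>*" for u w
    using uw
  proof (induction rule: rtrancl_induct)
    case base then show ?case using u by auto
  next
    case (step w z)
    from step(2) have cs: "(w \<in> A \<and> z = s w) \<or> (z \<in> A \<and> w = s z)" by (auto simp: srel_iff)
    show ?case
    proof (cases "w \<in> A \<and> z = s w")
      case True
      show ?thesis
      proof (cases "w = x")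
        case True
        then have "z = s x" using \<open>w \<in> A \<and> z = s w\<close> by simp
        then show ?thesis using step(3) True x(2) by auto
      next
        case False
        then have IH: "(u,w) \<in> ?Qr\<^sup>*" using step(3) by blast
        show ?thesis
        proof (cases "z = x")
          case True
          then have "w = y0" using \<open>w \<in> A \<and> z = s w\<close> y0 inj by (metis injD)
          then have "(w, s x) \<in> ?Qr" using y0 y0x ry0 by (simp add: srel_iff)
          then show ?thesis using IH True by (meson rtrancl.rtrancl_into_rtrancl)
        next
          case zx: False
          then have "w \<noteq> y0" using \<open>w \<in> A \<and> z = s w\<close> y0 by metis
          then have "r w = z" using rz False \<open>w \<in> A \<and> z = s w\<close> by metis
          then have "(w, z) \<in> ?Qr" using False \<open>w \<in> A \<and> z = s w\<close> by (simp add: srel_iff)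
          then show ?thesis using IH zx by (meson rtrancl.rtrancl_into_rtrancl)
        qed
      qed
    next
      case False
      then have zw: "z \<in> A" "w = s z" using cs by blast+
      show ?thesis
      proof (cases "z = x")
        case True
        then have "w = s x" using zw by simp
        then have "(u, s x) \<in> ?Qr\<^sup>*" using step(3) x(2) by metis
        then show ?thesis using True by simp
      next
        case zx: False
        show ?thesis
        proof (cases "z = y0")
          case True
          then have "w = x" using zw y0 by simp
          then have IH: "(u, s x) \<in> ?Qr\<^sup>*" using step(3) by blast
          have "(y0, s x) \<in> srel (A - {x}) r" using y0 y0x ry0 by (simp add: srel_iff)
          then have "(s x, y0) \<in> ?Qr" by blast
          then show ?thesis using IH True zx by (meson rtrancl.rtrancl_into_rtrancl)
        next
          case False
          then have "r z = w" using rz zx zw by metis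
          then have "(z, w) \<in> srel (A - {x}) r" using zx zw by (simp add: srel_iff)
          then have "(w, z) \<in> ?Qr" by blast
          moreover have "w \<noteq> x" using zw False y0 inj by (metis injD)
          ultimately show ?thesis using step(3) zx by (meson rtrancl.rtrancl_into_rtrancl)
        qed
      qed
    qed
  qed
  have stay: "w \<in> A - {x}" if "(u,w) \<in> ?Qr\<^sup>*" "u \<in> A - {x}" for u w
    using that
  proof (induction rule: rtrancl_induct)
    case base then show ?case by simp
  next
    case (step w z)
    have "r ` (A - {x}) = A - {x}" by (rule permutes_image[OF rp'])
    then show ?case using step by (auto simp: srel_iff)
  qed
  have cls: "?Qr\<^sup>* `` {u} = ?Qs\<^sup>* `` {u} - {x}" if "u \<in> A - {x}" for u
  proof
    show "?Qr\<^sup>* `` {u} \<subseteq> ?Qs\<^sup>* `` {u} - {x}" using c2 stay that by blast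
    show "?Qs\<^sup>* `` {u} - {x} \<subseteq> ?Qr\<^sup>* `` {u}" using c1 that by blast
  qed
  let ?fs = "\<lambda>y. ?Qs\<^sup>* `` {y}"
  let ?fr = "\<lambda>y. ?Qr\<^sup>* `` {y}"
  have "?fs x = ?fs (s x)"
    by (rule sym_class_eq[OF orel_sym]) (use x in \<open>auto simp: srel_iff\<close>)
  then have i1: "?fs ` A = ?fs ` (A - {x})" using x sxA by (auto simp: image_iff)
  have i2: "?fr ` (A - {x}) = (\<lambda>K. K - {x}) ` (?fs ` (A - {x}))"
    using cls by (auto simp: image_iff)
  have inj2: "inj_on (\<lambda>K. K - {x}) (?fs ` (A - {x}))"
  proof (rule inj_onI)
    fix K1 K2 assume "K1 \<in> ?fs ` (A - {x})" "K2 \<in> ?fs ` (A - {x})" "K1 - {x} = K2 - {x}"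
    then obtain u1 u2 where u: "u1 \<in> A - {x}" "u2 \<in> A - {x}" "K1 = ?fs u1" "K2 = ?fs u2" by blast
    have "u1 \<in> K1" using u by auto
    then have "u1 \<in> K2" using u \<open>K1 - {x} = K2 - {x}\<close> by blast
    then have "(u2, u1) \<in> ?Qs\<^sup>*" using u by blast
    then have "?fs u2 = ?fs u1" by (rule sym_class_eq[OF orel_sym])
    then show "K1 = K2" using u by simp
  qed
  show "ncyc A s = ncyc (A - {x}) r"
    unfolding ncyc_def orel_def using i1 i2 inj2 by (simp add: card_image)
qed

lemma sign_ncyc:
  assumes "finite A" "s permutes A"
  shows "sign s = (-1::int) ^ (card A + ncyc A s)"
  using assms
proof (induction "card A" arbitrary: A s rule: less_induct)
  case less
  show ?case
  proof (cases "A = {}")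
    case True
    then have "s = id" using less by simp
    then show ?thesis using True by (simp add: ncyc_def)
  next
    case ne: False
    show ?thesis
    proof (cases "\<exists>x\<in>A. s x = x")
      case True
      then obtain x where x: "x \<in> A" "s x = x" by blast
      have p': "s permutes (A - {x})" by (rule permutes_superset[OF less(3)]) (use x in auto)
      have c: "card (A - {x}) < card A" using x less(2) by (meson card_Diff1_less)
      have IH: "sign s = (-1::int) ^ (card (A - {x}) + ncyc (A - {x}) s)"
        using less(1)[OF c _ p'] less(2) by simp
      have "card A = Suc (card (A - {x}))" using x less(2) by (metis card_Suc_Diff1)
      then show ?thesis using IH O1[OF less(2,3) x] by simp
    next
      case False
      then obtain x where x: "x \<in> A" "s x \<noteq> x" using ne by blast
      define r where "r = transpose x (s x) \<circ> s"
      have o2: "ncyc A s = ncyc (A - {x}) r" "r permutes (A - {x})"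
        using O2[OF less(2,3) x] unfolding r_def by blast+
      have c: "card (A - {x}) < card A" using x less(2) by (meson card_Diff1_less)
      have IH: "sign r = (-1::int) ^ (card (A - {x}) + ncyc (A - {x}) r)"
        using less(1)[OF c _ o2(2)] less(2) by simp
      have ps: "permutation s" using less(2,3) permutation_permutes by blast
      have "sign r = sign (transpose x (s x)) * sign s" unfolding r_def
        by (rule sign_compose[OF permutation_swap_id ps])
      then have "sign r = - sign s" using x by (simp add: sign_swap_id)
      moreover have "card A = Suc (card (A - {x}))" using x less(2) by (metis card_Suc_Diff1)
      ultimately show ?thesis using IH o2(1) by simp
    qed
  qed
qed

lemma card_disj:
  assumes "finite X" "finite Y" "card (X \<union> Y) = card X + card Y"
  shows "X \<inter> Y = {}"
proof -
  have "card (X \<union> Y) + card (X \<inter> Y) = card X + card Y" using assms(1,2) by (rule card_Un_Int[symmetric])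
  then have "card (X \<inter> Y) = 0" using assms(3) by simp
  moreover have "finite (X \<inter> Y)" using assms(1) by simp
  ultimately show ?thesis by simp
qed

locale kf =
  fixes F :: "('f,'b,'v) foam" and N k :: nat
  assumes cf: "is_closed_foam N F" and k3: "3 \<le> k" and kN: "k \<le> N"
begin

lemma fin_b: "finite (bindings F)" using cf unfolding is_closed_foam_def by blast
lemma fin_v: "finite (verts F)" using cf unfolding is_closed_foam_def by blast
lemma ebij: "bij_betw (\<lambda>(v,i). slot F v i) (verts F \<times> {1..4}) ({b\<in>bindings F. \<not> circ F b} \<times> UNIV)"
  using cf unfolding is_closed_foam_def by blast
lemma spok: "v \<in> verts F \<Longrightarrow> singular_point_ok F v" using cf unfolding is_closed_foam_def by blast
lemma bok: "b \<in> bindings F \<Longrightarrow> sheets F b \<subseteq> facets F \<and> lab F (big F b) = lab F (sm1 F b) + lab F (sm2 F b)"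
  using cf unfolding is_closed_foam_def by blast

lemma slot_in: assumes "v \<in> verts F" "i \<in> {1..4}"
  shows "fst (slot F v i) \<in> bindings F" "\<not> circ F (fst (slot F v i))"
proof -
  have "(\<lambda>(v,i). slot F v i) (v,i) \<in> {b\<in>bindings F. \<not> circ F b} \<times> UNIV"
    using ebij assms by (meson SigmaI bij_betwE)
  then show "fst (slot F v i) \<in> bindings F" "\<not> circ F (fst (slot F v i))" by auto
qed

lemma disj:
  assumes col: "coloring N F col" and b: "b \<in> bindings F"
  shows "col (sm1 F b) \<inter> col (sm2 F b) = {}" "col (sm1 F b) \<union> col (sm2 F b) = col (big F b)"
proof -
  have sh: "sm1 F b \<in> facets F" "sm2 F b \<in> facets F" "big F b \<in> facets F"
    using bok[OF b] unfolding sheets_def by auto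
  show u: "col (sm1 F b) \<union> col (sm2 F b) = col (big F b)" using col b unfolding coloring_def by blast
  have c: "card (col f) = lab F f" "col f \<subseteq> {1..N}" if "f \<in> facets F" for f
    using col that unfolding coloring_def by blast+
  have fin: "finite (col f)" if "f \<in> facets F" for f using c(2)[OF that] finite_subset by blast
  show "col (sm1 F b) \<inter> col (sm2 F b) = {}"
    by (rule card_disj) (use fin sh c u bok[OF b] in auto)
qed

lemma trip_iff:
  assumes col: "coloring N F col" and b: "b \<in> bindings F" and pk: "p \<noteq> k"
  shows "triple_binding F col p k b \<longleftrightarrow>
     (p \<in> col (sm1 F b) \<and> k \<in> col (sm2 F b)) \<or> (k \<in> col (sm1 F b) \<and> p \<in> col (sm2 F b))"
  using disj[OF col b] b unfolding triple_binding_def sheets_def in_Fi_def in_Fij_def by auto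

lemma pos_iff:
  assumes col: "coloring N F col" and b: "b \<in> bindings F"
  shows "positive_binding F col p k b \<longleftrightarrow> p \<in> col (sm1 F b) \<and> k \<in> col (sm2 F b)"
  using disj[OF col b] unfolding positive_binding_def by auto

lemma pos_trip:
  assumes col: "coloring N F col" and b: "b \<in> bindings F" and pk: "p \<noteq> k"
  shows "positive_binding F col p k b \<Longrightarrow> triple_binding F col p k b"
  using trip_iff[OF assms] pos_iff[OF col b] by blast

lemma LL:
  assumes col: "coloring N F col" and v: "v \<in> verts F" and pk: "p \<noteq> k"
  defines "t \<equiv> \<lambda>i. triple_binding F col p k (fst (slot F v i))"
    and "q \<equiv> \<lambda>i. positive_binding F col p k (fst (slot F v i))"
  shows "(\<not> t 1 \<and> \<not> t 2 \<and> \<not> t 3 \<and> \<not> t 4) \<or>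
         ((t 1 \<noteq> t 2) \<and> (t 3 \<noteq> t 4) \<and> (t 1 \<longrightarrow> t 3 \<longrightarrow> (q 1 \<longleftrightarrow> q 3)) \<and>
          (t 1 \<longrightarrow> t 4 \<longrightarrow> (q 1 \<longleftrightarrow> q 4)) \<and> (t 2 \<longrightarrow> t 3 \<longrightarrow> (q 2 \<longleftrightarrow> q 3)) \<and>
          (t 2 \<longrightarrow> t 4 \<longrightarrow> (q 2 \<longleftrightarrow> q 4)))"
proof -
  define b1 b2 b3 b4 where "b1 = fst (slot F v 1)" "b2 = fst (slot F v 2)"
    "b3 = fst (slot F v 3)" "b4 = fst (slot F v 4)"
  have bs: "b1 \<in> bindings F" "b2 \<in> bindings F" "b3 \<in> bindings F" "b4 \<in> bindings F"
    unfolding b1_b2_b3_b4_def using slot_in(1)[OF v] by auto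
  have sp: "sm1 F b2 = big F b1" "sm1 F b3 = sm2 F b1" "sm2 F b3 = sm2 F b2"
        "sm1 F b4 = sm1 F b1" "sm2 F b4 = big F b3" "big F b4 = big F b2"
    using spok[OF v] unfolding singular_point_ok_def b1_b2_b3_b4_def Let_def by blast+
  define A B C where "A = col (sm1 F b1)" "B = col (sm2 F b1)" "C = col (sm2 F b2)"
  note d1 = disj[OF col bs(1)] and d2 = disj[OF col bs(2)] and d3 = disj[OF col bs(3)] and d4 = disj[OF col bs(4)]
  have AB: "A \<inter> B = {}" using d1 unfolding A_B_C_def by simp
  have ABC: "(A \<union> B) \<inter> C = {}" using d2 sp d1 unfolding A_B_C_def by simp
  have s1: "col (sm1 F b1) = A" "col (sm2 F b1) = B" using A_B_C_def by auto
  have s2: "col (sm1 F b2) = A \<union> B" "col (sm2 F b2) = C" using A_B_C_def sp d1 by auto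
  have s3: "col (sm1 F b3) = B" "col (sm2 F b3) = C" using A_B_C_def sp by auto
  have s4: "col (sm1 F b4) = A" "col (sm2 F b4) = B \<union> C" using A_B_C_def sp d3 s3 by auto
  have t: "t 1 = ((p \<in> A \<and> k \<in> B) \<or> (k \<in> A \<and> p \<in> B))"
       "t 2 = ((p \<in> A \<union> B \<and> k \<in> C) \<or> (k \<in> A \<union> B \<and> p \<in> C))"
       "t 3 = ((p \<in> B \<and> k \<in> C) \<or> (k \<in> B \<and> p \<in> C))"
       "t 4 = ((p \<in> A \<and> k \<in> B \<union> C) \<or> (k \<in> A \<and> p \<in> B \<union> C))"
    unfolding t_def using trip_iff[OF col bs(1) pk] trip_iff[OF col bs(2) pk] trip_iff[OF col bs(3) pk]
      trip_iff[OF col bs(4) pk] s1 s2 s3 s4 unfolding b1_b2_b3_b4_def by simp_all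
  have q: "q 1 = (p \<in> A \<and> k \<in> B)" "q 2 = (p \<in> A \<union> B \<and> k \<in> C)"
       "q 3 = (p \<in> B \<and> k \<in> C)" "q 4 = (p \<in> A \<and> k \<in> B \<union> C)"
    unfolding q_def using pos_iff[OF col bs(1)] pos_iff[OF col bs(2)] pos_iff[OF col bs(3)]
      pos_iff[OF col bs(4)] s1 s2 s3 s4 unfolding b1_b2_b3_b4_def by simp_all
  have c1: "\<not> (x \<in> A \<and> x \<in> B)" "\<not> (x \<in> A \<and> x \<in> C)" "\<not> (x \<in> B \<and> x \<in> C)" for x
    using AB ABC by blast+
  show ?thesis unfolding t q using c1[of p] c1[of k] pk by (simp only: Un_iff) blast
qed


lemma bools:
  assumes v: "v \<in> verts F"
  shows "snd (slot F v 1) = snd (slot F v 2)" "snd (slot F v 3) = snd (slot F v 4)"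
        "snd (slot F v 1) \<noteq> snd (slot F v 3)"
  using spok[OF v] unfolding singular_point_ok_def Let_def by blast+

lemma four: "(i::nat) \<in> {1..4} \<longleftrightarrow> i = 1 \<or> i = 2 \<or> i = 3 \<or> i = 4" by auto

lemma tslot_ex1:
  assumes col: "coloring N F col" and v: "v \<in> verts F" and pk: "p \<noteq> k"
    and ex: "\<exists>i\<in>{1..4}. triple_binding F col p k (fst (slot F v i))"
  shows "\<exists>!i. i \<in> {1..4} \<and> triple_binding F col p k (fst (slot F v i)) \<and> snd (slot F v i) = e"
proof -
  define t where "t = (\<lambda>i. triple_binding F col p k (fst (slot F v i)))"
  have ex': "t 1 \<or> t 2 \<or> t 3 \<or> t 4"
  proof -
    obtain i where "i \<in> {1..4}" "t i" using ex unfolding t_def by blast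
    then show ?thesis unfolding four by blast
  qed
  have L: "t 1 \<noteq> t 2" "t 3 \<noteq> t 4"
    using LL[OF col v pk] ex' unfolding t_def by blast+
  note B = bools[OF v]
  have "\<exists>!i. (i = 1 \<or> i = 2 \<or> i = 3 \<or> i = 4) \<and> t i \<and> snd (slot F v i) = e"
  proof (cases "e = snd (slot F v 1)")
    case True
    show "\<exists>!i. (i = 1 \<or> i = 2 \<or> i = 3 \<or> i = 4) \<and> t i \<and> snd (slot F v i) = e"
    proof (cases "t 1")
      case True
      then show ?thesis using \<open>e = snd (slot F v 1)\<close> L B by (intro ex1I[of _ 1]) auto
    next
      case False
      then show ?thesis using \<open>e = snd (slot F v 1)\<close> L B by (intro ex1I[of _ 2]) auto
    qed
  next
    case False
    then have e3: "e = snd (slot F v 3)" using B by (cases e; cases "snd (slot F v 1)"; cases "snd (slot F v 3)") auto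
    show "\<exists>!i. (i = 1 \<or> i = 2 \<or> i = 3 \<or> i = 4) \<and> t i \<and> snd (slot F v i) = e"
    proof (cases "t 3")
      case True
      then show ?thesis using e3 L B by (intro ex1I[of _ 3]) auto
    next
      case False
      then show ?thesis using e3 L B by (intro ex1I[of _ 4]) auto
    qed
  qed
  then show ?thesis unfolding t_def four .
qed

definition tslot where
  "tslot col p v e = (THE i. i \<in> {1..4} \<and> triple_binding F col p k (fst (slot F v i)) \<and> snd (slot F v i) = e)"

lemma tslot:
  assumes col: "coloring N F col" and v: "v \<in> verts F" and pk: "p \<noteq> k"
    and ex: "\<exists>i\<in>{1..4}. triple_binding F col p k (fst (slot F v i))"
  shows "tslot col p v e \<in> {1..4}" "triple_binding F col p k (fst (slot F v (tslot col p v e)))"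
    "snd (slot F v (tslot col p v e)) = e"
    "\<And>i. i \<in> {1..4} \<Longrightarrow> triple_binding F col p k (fst (slot F v i)) \<Longrightarrow> snd (slot F v i) = e \<Longrightarrow> i = tslot col p v e"
proof -
  note E = tslot_ex1[OF col v pk ex, of e]
  have c: "tslot col p v e \<in> {1..4} \<and> triple_binding F col p k (fst (slot F v (tslot col p v e))) \<and> snd (slot F v (tslot col p v e)) = e"
    unfolding tslot_def by (rule theI'[OF E])
  show "tslot col p v e \<in> {1..4}" using c by (rule conjunct1)
  show "triple_binding F col p k (fst (slot F v (tslot col p v e)))" using c by (metis conjunct1 conjunct2)
  show "snd (slot F v (tslot col p v e)) = e" using c by (metis conjunct2)
  fix i assume a: "i \<in> {1..4}" "triple_binding F col p k (fst (slot F v i))" "snd (slot F v i) = e"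
  have "(THE i. i \<in> {1..4} \<and> triple_binding F col p k (fst (slot F v i)) \<and> snd (slot F v i) = e) = i"
    by (rule the1_equality[OF E]) (use a in blast)
  then show "i = tslot col p v e" unfolding tslot_def by simp
qed

definition epos where
  "epos b e = inv_into (verts F \<times> {1..4}) (\<lambda>(v,i). slot F v i) (b,e)"

lemma epos:
  assumes "b \<in> bindings F" "\<not> circ F b"
  shows "epos b e \<in> verts F \<times> {1..4}" "slot F (fst (epos b e)) (snd (epos b e)) = (b,e)"
proof -
  have img: "(\<lambda>(v,i). slot F v i) ` (verts F \<times> {1..4}) = {b\<in>bindings F. \<not> circ F b} \<times> UNIV"
    using ebij by (simp add: bij_betw_def)
  have "(b,e) \<in> (\<lambda>(v,i). slot F v i) ` (verts F \<times> {1..4})" using img assms by auto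
  then show "epos b e \<in> verts F \<times> {1..4}" unfolding epos_def by (rule inv_into_into)
  have "(\<lambda>(v,i). slot F v i) (epos b e) = (b,e)" unfolding epos_def
    using \<open>(b,e) \<in> _\<close> by (rule f_inv_into_f)
  then show "slot F (fst (epos b e)) (snd (epos b e)) = (b,e)" by (simp add: case_prod_beta)
qed

lemma epos_uniq:
  assumes "v \<in> verts F" "i \<in> {1..4}" "slot F v i = (b,e)"
  shows "epos b e = (v,i)"
proof -
  have inj: "inj_on (\<lambda>(v,i). slot F v i) (verts F \<times> {1..4})" using ebij by (simp add: bij_betw_def)
  have "inv_into (verts F \<times> {1..4}) (\<lambda>(v,i). slot F v i) ((\<lambda>(v,i). slot F v i) (v,i)) = (v,i)"
    by (rule inv_into_f_f[OF inj]) (use assms in auto)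
  then show ?thesis using assms(3) unfolding epos_def by simp
qed

definition nxt where
  "nxt col p b = (if circ F b then b else
     fst (slot F (fst (epos b True)) (tslot col p (fst (epos b True)) False)))"

definition prv where
  "prv col p b = (if circ F b then b else
     fst (slot F (fst (epos b False)) (tslot col p (fst (epos b False)) True)))"

lemma nxt_facts:
  assumes col: "coloring N F col" and pk: "p \<noteq> k" and b: "b \<in> bindings F" "\<not> circ F b"
    and tb: "triple_binding F col p k b"
  defines "v \<equiv> fst (epos b True)"
  shows "nxt col p b \<in> bindings F" "\<not> circ F (nxt col p b)" "triple_binding F col p k (nxt col p b)"
    "epos (nxt col p b) False = (v, tslot col p v False)"
    "prv col p (nxt col p b) = b"
    "tslot col p v True = snd (epos b True)"
    "v \<in> verts F"
proof -
  note ep = epos[OF b, of True]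
  have vV: "v \<in> verts F" and iI: "snd (epos b True) \<in> {1..4}" using ep(1) unfolding v_def by auto
  show "v \<in> verts F" by (rule vV)
  have sl: "slot F v (snd (epos b True)) = (b, True)" using ep(2) unfolding v_def .
  have ex: "\<exists>i\<in>{1..4}. triple_binding F col p k (fst (slot F v i))"
    using iI sl tb by (metis fst_conv)
  note ts = tslot[OF col vV pk ex]
  have nx: "nxt col p b = fst (slot F v (tslot col p v False))"
    unfolding nxt_def v_def using b by simp
  show "nxt col p b \<in> bindings F" "\<not> circ F (nxt col p b)"
    unfolding nx using slot_in[OF vV ts(1)] by blast+
  show "triple_binding F col p k (nxt col p b)" unfolding nx by (rule ts(2))
  have sl2: "slot F v (tslot col p v False) = (nxt col p b, False)"
    unfolding nx using ts(3)[of False] by (metis prod.collapse)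
  show ep2: "epos (nxt col p b) False = (v, tslot col p v False)"
    by (rule epos_uniq[OF vV ts(1) sl2])
  show tT: "tslot col p v True = snd (epos b True)"
    using ts(4)[OF iI, of True] sl tb by simp
  have "\<not> circ F (nxt col p b)" unfolding nx using slot_in[OF vV ts(1)] by blast
  then have "prv col p (nxt col p b) = fst (slot F v (tslot col p v True))"
    unfolding prv_def ep2 by simp
  then show "prv col p (nxt col p b) = b" using tT sl by simp
qed

lemma prv_facts:
  assumes col: "coloring N F col" and pk: "p \<noteq> k" and b: "b \<in> bindings F" "\<not> circ F b"
    and tb: "triple_binding F col p k b"
  shows "prv col p b \<in> bindings F" "\<not> circ F (prv col p b)" "triple_binding F col p k (prv col p b)"
    "nxt col p (prv col p b) = b"
proof -
  define v where "v = fst (epos b False)"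
  note ep = epos[OF b, of False]
  have vV: "v \<in> verts F" and iI: "snd (epos b False) \<in> {1..4}" using ep(1) unfolding v_def by auto
  have sl: "slot F v (snd (epos b False)) = (b, False)" using ep(2) unfolding v_def .
  have ex: "\<exists>i\<in>{1..4}. triple_binding F col p k (fst (slot F v i))"
    using iI sl tb by (metis fst_conv)
  note ts = tslot[OF col vV pk ex]
  have px: "prv col p b = fst (slot F v (tslot col p v True))"
    unfolding prv_def v_def using b by simp
  show "prv col p b \<in> bindings F" "\<not> circ F (prv col p b)"
    unfolding px using slot_in[OF vV ts(1)] by blast+
  show "triple_binding F col p k (prv col p b)" unfolding px by (rule ts(2))
  have sl2: "slot F v (tslot col p v True) = (prv col p b, True)"
    unfolding px using ts(3)[of True] by (metis prod.collapse)
  have ep2: "epos (prv col p b) True = (v, tslot col p v True)"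
    by (rule epos_uniq[OF vV ts(1) sl2])
  have tF: "tslot col p v False = snd (epos b False)"
    using ts(4)[OF iI, of False] sl tb by simp
  have "\<not> circ F (prv col p b)" unfolding px using slot_in[OF vV ts(1)] by blast
  then have "nxt col p (prv col p b) = fst (slot F v (tslot col p v False))"
    unfolding nxt_def ep2 by simp
  then show "nxt col p (prv col p b) = b" using tF sl by simp
qed

end

context kf
begin

lemma slot_half:
  assumes v: "v \<in> verts F" and i: "i \<in> {1..4}" and j: "j \<in> {1..4}"
    and ne: "snd (slot F v i) \<noteq> snd (slot F v j)"
  shows "(i \<in> {1,2} \<and> j \<in> {3,4}) \<or> (i \<in> {3,4} \<and> j \<in> {1,2})"
proof -
  note B = bools[OF v]
  have "i = 1 \<or> i = 2 \<or> i = 3 \<or> i = 4" "j = 1 \<or> j = 2 \<or> j = 3 \<or> j = 4" using i j four by blast+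
  then show ?thesis using B ne by (elim disjE) simp_all
qed

lemma pos_eq_slots:
  assumes col: "coloring N F col" and v: "v \<in> verts F" and pk: "p \<noteq> k"
    and i: "i \<in> {1..4}" and j: "j \<in> {1..4}"
    and ti: "triple_binding F col p k (fst (slot F v i))" and tj: "triple_binding F col p k (fst (slot F v j))"
  shows "positive_binding F col p k (fst (slot F v i)) \<longleftrightarrow> positive_binding F col p k (fst (slot F v j))"
proof (cases "snd (slot F v i) = snd (slot F v j)")
  case True
  have ex: "\<exists>i\<in>{1..4}. triple_binding F col p k (fst (slot F v i))" using i ti by blast
  note ts = tslot[OF col v pk ex]
  have "i = j" using ts(4)[OF i ti True] ts(4)[OF j tj refl] by simp
  then show ?thesis by simp
next
  case False
  note h = slot_half[OF v i j False]
  note L = LL[OF col v pk]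
  have "i = 1 \<or> i = 2 \<or> i = 3 \<or> i = 4" "j = 1 \<or> j = 2 \<or> j = 3 \<or> j = 4" using i j four by blast+
  then show ?thesis using h L ti tj by (elim disjE) auto
qed

lemma nxt_pos:
  assumes col: "coloring N F col" and pk: "p \<noteq> k" and b: "b \<in> bindings F"
    and tb: "triple_binding F col p k b"
  shows "positive_binding F col p k (nxt col p b) \<longleftrightarrow> positive_binding F col p k b"
proof (cases "circ F b")
  case True
  then show ?thesis unfolding nxt_def by simp
next
  case False
  note nf = nxt_facts[OF col pk b False tb]
  define v where "v = fst (epos b True)"
  note ep = epos[OF b False, of True]
  have iI: "snd (epos b True) \<in> {1..4}" using ep(1) by auto
  have sl: "slot F v (snd (epos b True)) = (b, True)" using ep(2) unfolding v_def .
  have ex: "\<exists>i\<in>{1..4}. triple_binding F col p k (fst (slot F v i))"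
    using iI sl tb by (metis fst_conv)
  note ts = tslot[OF col nf(7)[folded v_def] pk ex]
  have nx: "nxt col p b = fst (slot F v (tslot col p v False))"
    unfolding nxt_def v_def using False by simp
  show ?thesis
    using pos_eq_slots[OF col nf(7)[folded v_def] pk ts(1)[of False] iI ts(2)[of False]] sl tb nx by simp
qed

lemma adj:
  assumes col: "coloring N F col" and pk: "p \<noteq> k" and v: "v \<in> verts F"
    and i: "i \<in> {1..4}" and j: "j \<in> {1..4}"
    and ti: "triple_binding F col p k (fst (slot F v i))" and tj: "triple_binding F col p k (fst (slot F v j))"
  shows "fst (slot F v j) = fst (slot F v i) \<or> fst (slot F v j) = nxt col p (fst (slot F v i))
       \<or> fst (slot F v i) = nxt col p (fst (slot F v j))"
proof -
  have ex: "\<exists>i\<in>{1..4}. triple_binding F col p k (fst (slot F v i))" using i ti by blast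
  note ts = tslot[OF col v pk ex]
  have nx: "nxt col p (fst (slot F v a)) = fst (slot F v (tslot col p v False))"
    if a: "a \<in> {1..4}" "snd (slot F v a) = True" for a
  proof -
    have nc: "\<not> circ F (fst (slot F v a))" using slot_in[OF v a(1)] by blast
    have "slot F v a = (fst (slot F v a), True)" using a(2) by (metis prod.collapse)
    then have "epos (fst (slot F v a)) True = (v, a)" using epos_uniq[OF v a(1)] by blast
    then show ?thesis unfolding nxt_def using nc by simp
  qed
  have ci: "i = tslot col p v (snd (slot F v i))" using ts(4)[OF i ti refl] .
  have cj: "j = tslot col p v (snd (slot F v j))" using ts(4)[OF j tj refl] .
  show ?thesis
  proof (cases "snd (slot F v i) = snd (slot F v j)")
    case True
    then have "i = j" using ci cj by simp
    then show ?thesis by simp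
  next
    case False
    show ?thesis
    proof (cases "snd (slot F v i)")
      case True
      then have "snd (slot F v j) = False" using False by simp
      then have "j = tslot col p v False" using cj by simp
      moreover have "snd (slot F v i) = True" using True by simp
      ultimately show ?thesis using nx[OF i] by simp
    next
      case f: False
      then have "snd (slot F v j) = True" using False by simp
      then have "i = tslot col p v False" using ci f by simp
      then show ?thesis using nx[OF j \<open>snd (slot F v j) = True\<close>] by simp
    qed
  qed
qed

definition Pset where "Pset col p = {b \<in> bindings F. positive_binding F col p k b}"
definition sig where "sig col p b = (if b \<in> Pset col p then nxt col p b else b)"

lemma fin_P: "finite (Pset col p)" unfolding Pset_def using fin_b by simp

lemma nxt_in_P:
  assumes col: "coloring N F col" and pk: "p \<noteq> k" and b: "b \<in> Pset col p"
  shows "nxt col p b \<in> Pset col p" "prv col p (nxt col p b) = b"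
proof -
  have bb: "b \<in> bindings F" "positive_binding F col p k b" using b unfolding Pset_def by auto
  have tb: "triple_binding F col p k b" using pos_trip[OF col bb(1) pk bb(2)] .
  show "nxt col p b \<in> Pset col p"
  proof (cases "circ F b")
    case True then show ?thesis using b unfolding nxt_def by simp
  next
    case False
    then show ?thesis using nxt_facts[OF col pk bb(1) False tb] nxt_pos[OF col pk bb(1) tb] bb
      unfolding Pset_def by simp
  qed
  show "prv col p (nxt col p b) = b"
  proof (cases "circ F b")
    case True then show ?thesis unfolding nxt_def prv_def by simp
  next
    case False
    then show ?thesis using nxt_facts[OF col pk bb(1) False tb] by simp
  qed
qed

lemma sig_perm:
  assumes col: "coloring N F col" and pk: "p \<noteq> k"
  shows "sig col p permutes Pset col p"
proof (rule inj_imp_permutes)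
  show "inj_on (sig col p) (Pset col p)"
  proof (rule inj_onI)
    fix x y assume "x \<in> Pset col p" "y \<in> Pset col p" "sig col p x = sig col p y"
    then show "x = y" unfolding sig_def using nxt_in_P(2)[OF col pk] by metis
  qed
  show "finite (Pset col p)" by (rule fin_P)
  show "sig col p x \<in> Pset col p" if "x \<in> Pset col p" for x
    using that nxt_in_P(1)[OF col pk] unfolding sig_def by simp
  show "sig col p x = x" if "x \<notin> Pset col p" for x using that unfolding sig_def by simp
qed

lemma adjR:
  assumes col: "coloring N F col" and pk: "p \<noteq> k" and yz: "(y, z) \<in> triple_adj F col p k"
  shows "z \<in> bindings F" "triple_binding F col p k y" "triple_binding F col p k z"
    "z = y \<or> z = nxt col p y \<or> y = nxt col p z"
    "positive_binding F col p k y \<longleftrightarrow> positive_binding F col p k z"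
proof -
  from yz obtain v where v: "v \<in> verts F" "touches F v y" "touches F v z"
    and ty: "triple_binding F col p k y" and tz: "triple_binding F col p k z"
    unfolding triple_adj_def by blast
  show "triple_binding F col p k y" "triple_binding F col p k z" by fact+
  show "z \<in> bindings F" using tz unfolding triple_binding_def by blast
  obtain i j where ij: "i \<in> {1..4}" "j \<in> {1..4}" "fst (slot F v i) = y" "fst (slot F v j) = z"
    using v unfolding touches_def by blast
  show "z = y \<or> z = nxt col p y \<or> y = nxt col p z"
    using adj[OF col pk v(1) ij(1,2)] ij ty tz by simp
  show "positive_binding F col p k y \<longleftrightarrow> positive_binding F col p k z"
    using pos_eq_slots[OF col v(1) pk ij(1,2)] ij ty tz by simp
qed

lemma R_stays:
  assumes col: "coloring N F col" and pk: "p \<noteq> k"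
    and r: "(b, y) \<in> (triple_adj F col p k)\<^sup>*" and b: "b \<in> Pset col p"
  shows "y \<in> Pset col p \<and> (b, y) \<in> orel (Pset col p) (sig col p)"
  using r
proof (induction rule: rtrancl_induct)
  case base then show ?case using b unfolding orel_def by simp
next
  case (step y z)
  note a = adjR[OF col pk step(2)]
  have yP: "y \<in> Pset col p" using step(3) by blast
  have zP: "z \<in> Pset col p" using a(1,5) yP unfolding Pset_def by simp
  have "(y, z) \<in> srel (Pset col p) (sig col p) \<union> (srel (Pset col p) (sig col p))\<inverse> \<or> z = y"
    using a(4) yP zP unfolding sig_def by (auto simp: srel_iff)
  then have "(y, z) \<in> orel (Pset col p) (sig col p)" unfolding orel_def by auto
  then show ?case using step(3) zP unfolding orel_def by (meson rtrancl_trans)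
qed

lemma sig_step_R:
  assumes col: "coloring N F col" and pk: "p \<noteq> k" and x: "x \<in> Pset col p"
  shows "(x, sig col p x) \<in> (triple_adj F col p k)\<^sup>*" "(sig col p x, x) \<in> (triple_adj F col p k)\<^sup>*"
proof -
  have bb: "x \<in> bindings F" "positive_binding F col p k x" using x unfolding Pset_def by auto
  have tb: "triple_binding F col p k x" using pos_trip[OF col bb(1) pk bb(2)] .
  have "(x, sig col p x) \<in> triple_adj F col p k \<and> (sig col p x, x) \<in> triple_adj F col p k \<or> sig col p x = x"
  proof (cases "circ F x")
    case True then show ?thesis unfolding sig_def nxt_def by simp
  next
    case False
    note nf = nxt_facts[OF col pk bb(1) False tb]
    define v where "v = fst (epos x True)"
    note ep = epos[OF bb(1) False, of True]
    have iI: "snd (epos x True) \<in> {1..4}" using ep(1) by auto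
    have sl: "slot F v (snd (epos x True)) = (x, True)" using ep(2) unfolding v_def .
    have t1: "touches F v x" unfolding touches_def using iI sl by (metis fst_conv)
    have "slot F v (tslot col p v False) = (nxt col p x, False)"
    proof -
      have "epos (nxt col p x) False = (v, tslot col p v False)" using nf(4) unfolding v_def .
      then show ?thesis using epos[OF nf(1,2), of False] by simp
    qed
    moreover have "tslot col p v False \<in> {1..4}"
    proof -
      have ex: "\<exists>i\<in>{1..4}. triple_binding F col p k (fst (slot F v i))"
        using iI sl tb by (metis fst_conv)
      show ?thesis using tslot(1)[OF col nf(7)[folded v_def] pk ex] .
    qed
    ultimately have t2: "touches F v (nxt col p x)" unfolding touches_def by (metis fst_conv)
    have "sig col p x = nxt col p x" using x unfolding sig_def by simp
    then show ?thesis using t1 t2 nf(3,7) tb unfolding triple_adj_def v_def by auto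
  qed
  then show "(x, sig col p x) \<in> (triple_adj F col p k)\<^sup>*" "(sig col p x, x) \<in> (triple_adj F col p k)\<^sup>*"
    by auto
qed

lemma class_eq:
  assumes col: "coloring N F col" and pk: "p \<noteq> k" and b: "b \<in> Pset col p"
  shows "(triple_adj F col p k)\<^sup>* `` {b} = orel (Pset col p) (sig col p) `` {b}"
proof
  show "(triple_adj F col p k)\<^sup>* `` {b} \<subseteq> orel (Pset col p) (sig col p) `` {b}"
    using R_stays[OF col pk _ b] by blast
  have "srel (Pset col p) (sig col p) \<union> (srel (Pset col p) (sig col p))\<inverse> \<subseteq> (triple_adj F col p k)\<^sup>*"
    using sig_step_R[OF col pk] by (auto simp: srel_iff)
  then have "orel (Pset col p) (sig col p) \<subseteq> (triple_adj F col p k)\<^sup>*"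
    unfolding orel_def by (metis rtrancl_mono rtrancl_idemp)
  then show "orel (Pset col p) (sig col p) `` {b} \<subseteq> (triple_adj F col p k)\<^sup>* `` {b}" by blast
qed

lemma theta_ncyc:
  assumes col: "coloring N F col" and pk: "p \<noteq> k"
  shows "theta_plus F col p k = ncyc (Pset col p) (sig col p)"
proof -
  let ?R = "(triple_adj F col p k)\<^sup>*"
  have "{C \<in> triple_circles F col p k. \<forall>b\<in>C. positive_binding F col p k b}
        = (\<lambda>b. orel (Pset col p) (sig col p) `` {b}) ` Pset col p"
  proof
    show "{C \<in> triple_circles F col p k. \<forall>b\<in>C. positive_binding F col p k b}
        \<subseteq> (\<lambda>b. orel (Pset col p) (sig col p) `` {b}) ` Pset col p"
    proof
      fix C assume "C \<in> {C \<in> triple_circles F col p k. \<forall>b\<in>C. positive_binding F col p k b}"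
      then obtain b where b: "triple_binding F col p k b" "C = ?R `` {b}" "\<forall>b\<in>C. positive_binding F col p k b"
        unfolding triple_circles_def by blast
      have "b \<in> C" using b(2) by blast
      then have "b \<in> Pset col p" using b unfolding Pset_def triple_binding_def by blast
      then show "C \<in> (\<lambda>b. orel (Pset col p) (sig col p) `` {b}) ` Pset col p"
        using b(2) class_eq[OF col pk] by blast
    qed
    show "(\<lambda>b. orel (Pset col p) (sig col p) `` {b}) ` Pset col p
       \<subseteq> {C \<in> triple_circles F col p k. \<forall>b\<in>C. positive_binding F col p k b}"
    proof
      fix C assume "C \<in> (\<lambda>b. orel (Pset col p) (sig col p) `` {b}) ` Pset col p"
      then obtain b where b: "b \<in> Pset col p" "C = ?R `` {b}" using class_eq[OF col pk] by blast
      have tb: "triple_binding F col p k b" using b(1) pos_trip[OF col _ pk] unfolding Pset_def by blast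
      have "C \<in> triple_circles F col p k" unfolding triple_circles_def using tb b(2) by blast
      moreover have "\<forall>y\<in>C. positive_binding F col p k y"
        using R_stays[OF col pk _ b(1)] b(2) unfolding Pset_def by blast
      ultimately show "C \<in> {C \<in> triple_circles F col p k. \<forall>b\<in>C. positive_binding F col p k b}" by blast
    qed
  qed
  then show ?thesis unfolding theta_plus_def ncyc_def by simp
qed

end

lemma orel_inj_image:
  assumes g: "inj g" and a: "a \<in> A" and T: "\<And>x. x \<in> A \<Longrightarrow> T (g x) = g (s x)"
  shows "orel (g ` A) T `` {g a} = g ` (orel A s `` {a})"
proof -
  let ?Q = "srel A s \<union> (srel A s)\<inverse>"
  let ?Q' = "srel (g ` A) T \<union> (srel (g ` A) T)\<inverse>"
  have q': "(u, w) \<in> ?Q' \<longleftrightarrow> (\<exists>x y. u = g x \<and> w = g y \<and> (x, y) \<in> ?Q)" for u w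
    using T by (auto simp: srel_iff)
  have d1: "\<exists>y. w = g y \<and> (a, y) \<in> ?Q\<^sup>*" if "(g a, w) \<in> ?Q'\<^sup>*" for w
    using that
  proof (induction rule: rtrancl_induct)
    case base then show ?case by blast
  next
    case (step w z)
    then obtain y where y: "w = g y" "(a, y) \<in> ?Q\<^sup>*" by blast
    from step(2) obtain x1 y1 where "w = g x1" "z = g y1" "(x1, y1) \<in> ?Q" using q' by blast
    then have "x1 = y" using y g by (simp add: inj_eq)
    then have "(a, y1) \<in> ?Q\<^sup>*" using \<open>(x1, y1) \<in> ?Q\<close> y(2) by (meson rtrancl.rtrancl_into_rtrancl)
    then show ?case using \<open>z = g y1\<close> by blast
  qed
  have d2: "(g a, g y) \<in> ?Q'\<^sup>*" if "(a, y) \<in> ?Q\<^sup>*" for y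
    using that
  proof (induction rule: rtrancl_induct)
    case base then show ?case by blast
  next
    case (step y z)
    then have "(g y, g z) \<in> ?Q'" using q' by blast
    then show ?case using step(3) by (meson rtrancl.rtrancl_into_rtrancl)
  qed
  show ?thesis unfolding orel_def using d1 d2 by blast
qed

lemma ncyc_inj_image:
  assumes g: "inj g" and T: "\<And>x. x \<in> A \<Longrightarrow> T (g x) = g (s x)"
  shows "ncyc (g ` A) T = ncyc A s"
proof -
  have "(\<lambda>x. orel (g ` A) T `` {x}) ` (g ` A) = (\<lambda>K. g ` K) ` ((\<lambda>x. orel A s `` {x}) ` A)"
  proof -
    have "orel (g ` A) T `` {g a} = g ` (orel A s `` {a})" if "a \<in> A" for a
      by (rule orel_inj_image[where T=T and s=s, OF g that]) (rule T)
    then show ?thesis by (auto simp: image_iff)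
  qed
  moreover have "inj_on (\<lambda>K. g ` K) ((\<lambda>x. orel A s `` {x}) ` A)"
    using g by (meson inj_image_eq_iff inj_onI)
  ultimately show ?thesis unfolding ncyc_def by (simp add: card_image)
qed

lemma ncyc_union:
  assumes fA: "finite A" and fB: "finite B" and AB: "A \<inter> B = {}"
    and sA: "\<And>x. x \<in> A \<Longrightarrow> s x \<in> A" and sB: "\<And>x. x \<in> B \<Longrightarrow> s x \<in> B"
  shows "ncyc (A \<union> B) s = ncyc A s + ncyc B s"
proof -
  have gen: "orel (X \<union> Y) s `` {a} = orel X s `` {a} \<and> orel X s `` {a} \<subseteq> X"
    if XY: "X \<inter> Y = {}" and sX: "\<And>x. x \<in> X \<Longrightarrow> s x \<in> X" and sY: "\<And>x. x \<in> Y \<Longrightarrow> s x \<in> Y"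
      and a: "a \<in> X" for X Y a
  proof -
    let ?Q = "srel (X \<union> Y) s \<union> (srel (X \<union> Y) s)\<inverse>"
    let ?QX = "srel X s \<union> (srel X s)\<inverse>"
    have st: "y \<in> X \<and> (a, y) \<in> ?QX\<^sup>*" if "(a, y) \<in> ?Q\<^sup>*" for y
      using that
    proof (induction rule: rtrancl_induct)
      case base then show ?case using a by simp
    next
      case (step y z)
      have yX: "y \<in> X" using step(3) by blast
      have "z \<in> X \<and> (y, z) \<in> ?QX"
        using step(2) yX sX sY XY by (auto simp: srel_iff)
      then show ?case using step(3) by (meson rtrancl.rtrancl_into_rtrancl)
    qed
    have "?QX \<subseteq> ?Q" by (auto simp: srel_iff)
    then have "?QX\<^sup>* \<subseteq> ?Q\<^sup>*" by (rule rtrancl_mono)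
    moreover have "y \<in> X" if "(a, y) \<in> ?QX\<^sup>*" for y
    proof -
      have "(a, y) \<in> ?Q\<^sup>*" using that \<open>?QX\<^sup>* \<subseteq> ?Q\<^sup>*\<close> by blast
      then show ?thesis using st by blast
    qed
    ultimately show ?thesis unfolding orel_def using st by blast
  qed
  have BA: "B \<inter> A = {}" using AB by blast
  have eA: "(\<lambda>x. orel (A \<union> B) s `` {x}) ` A = (\<lambda>x. orel A s `` {x}) ` A"
    using gen[OF AB sA sB] by auto
  have eB: "(\<lambda>x. orel (A \<union> B) s `` {x}) ` B = (\<lambda>x. orel B s `` {x}) ` B"
    using gen[OF BA sB sA] by (auto simp: Un_commute)
  have dj: "(\<lambda>x. orel A s `` {x}) ` A \<inter> (\<lambda>x. orel B s `` {x}) ` B = {}"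
  proof -
    have "False" if "a \<in> A" "b \<in> B" "orel A s `` {a} = orel B s `` {b}" for a b
    proof -
      have "a \<in> orel A s `` {a}" unfolding orel_def by blast
      then have "a \<in> orel B s `` {b}" using that by simp
      moreover have "orel B s `` {b} \<subseteq> B" using gen[OF BA sB sA that(2)] by blast
      ultimately show False using that(1) AB by blast
    qed
    then show ?thesis by blast
  qed
  have "(\<lambda>x. orel (A \<union> B) s `` {x}) ` (A \<union> B) = (\<lambda>x. orel A s `` {x}) ` A \<union> (\<lambda>x. orel B s `` {x}) ` B"
    using eA eB by (simp add: image_Un)
  then show ?thesis unfolding ncyc_def using dj fA fB by (simp add: card_Un_disjoint)
qed

definition sw :: "nat \<Rightarrow> nat" where "sw j = (if j = 1 then 2 else if j = 2 then 1 else j)"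

definition swp :: "'b set \<Rightarrow> 'b \<times> nat \<Rightarrow> 'b \<times> nat" where
  "swp M x = (if fst x \<in> M then (fst x, sw (snd x)) else x)"

lemma sw_sw [simp]: "sw (sw j) = j" unfolding sw_def by auto

lemma swp_swp [simp]: "swp M (swp M x) = x" unfolding swp_def by auto

lemma swp_sign:
  assumes "finite M"
  shows "permutation (swp M) \<and> sign (swp M) = (-1::int) ^ card M"
  using assms
proof (induction rule: finite_induct)
  case empty
  have e: "swp {} = id" unfolding swp_def by auto
  show ?case unfolding e by (simp add: permutation_id)
next
  case (insert a M)
  have e: "swp (insert a M) = transpose (a,1) (a,2) \<circ> swp M"
  proof
    fix x :: "'a \<times> nat"
    obtain b j where x: "x = (b,j)" by (cases x)
    show "swp (insert a M) x = (transpose (a,1) (a,2) \<circ> swp M) x"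
    proof (cases "b = a")
      case True
      then have "b \<notin> M" using insert(2) by simp
      then show ?thesis unfolding x swp_def sw_def using True by (simp add: transpose_def)
    next
      case False
      then show ?thesis unfolding x swp_def sw_def by (simp add: transpose_def)
    qed
  qed
  have "sign (swp (insert a M)) = sign (transpose (a,1::nat) (a,2)) * sign (swp M)"
  proof -
    have "permutation (swp M)" using insert(3) by (rule conjunct1)
    then show ?thesis unfolding e by (rule sign_compose[OF permutation_swap_id])
  qed
  moreover have "sign (transpose (a,1::nat) (a,2)) = -1" by (simp add: sign_swap_id)
  moreover have "sign (swp M) = (-1::int) ^ card M" using insert(3) by (rule conjunct2)
  ultimately have s: "sign (swp (insert a M)) = - ((-1::int) ^ card M)" by simp
  have "permutation (swp M)" using insert(3) by (rule conjunct1)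
  then have p: "permutation (swp (insert a M))" unfolding e
    by (rule permutation_compose[OF permutation_swap_id])
  have c: "card (insert a M) = Suc (card M)" using insert(1,2) by simp
  show ?case using s p unfolding c by simp
qed

lemma swap_sw: "swap_pigments 1 2 X = sw ` X"
  unfolding swap_pigments_def sw_def by simp

lemma mem_swap: "x \<in> swap_pigments 1 2 X \<longleftrightarrow> sw x \<in> X"
  unfolding swap_sw by (metis image_iff sw_sw)

lemma swap_id: "(1 \<in> X \<longleftrightarrow> 2 \<in> X) \<Longrightarrow> swap_pigments 1 2 X = X"
  unfolding set_eq_iff mem_swap sw_def by auto

lemma sw_k: "(k::nat) \<ge> 3 \<Longrightarrow> sw k = k" unfolding sw_def by simp

definition pi :: "bool \<Rightarrow> nat \<Rightarrow> nat" where "pi fl j = (if fl then sw j else j)"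

lemma pi_12: "j \<in> {1,2} \<Longrightarrow> pi fl j \<in> {1,2}" unfolding pi_def sw_def by auto
lemma pi_pi [simp]: "pi fl (pi fl j) = j" unfolding pi_def by simp
lemma pi_F [simp]: "pi False j = j" unfolding pi_def by simp

locale kempe = kf F N k for F :: "('f,'b,'v) foam" and N k +
  fixes c :: "'f \<Rightarrow> nat set" and S :: "'f set"
  assumes col: "coloring N F c" and cs: "closed_subsurface F c 1 2 S"
begin

definition c' where "c' = kempe_move c 1 2 S"
definition Sb where "Sb = {b \<in> bindings F. \<exists>f\<in>sheets F b. f \<in> S}"
definition vs where "vs v \<longleftrightarrow> (\<exists>i\<in>{1..4}. fst (slot F v i) \<in> Sb)"
definition neutral where "neutral b \<longleftrightarrow> (\<forall>f\<in>sheets F b. 1 \<in> c f \<longleftrightarrow> 2 \<in> c f)"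

lemma S_F12: "f \<in> S \<Longrightarrow> f \<in> facets F \<and> (1 \<in> c f) \<noteq> (2 \<in> c f)"
  using cs unfolding closed_subsurface_def in_Fij_def by blast

lemma S_clos: "b \<in> bindings F \<Longrightarrow> f \<in> sheets F b \<Longrightarrow> g \<in> sheets F b \<Longrightarrow> f \<in> S \<Longrightarrow>
    (1 \<in> c g) \<noteq> (2 \<in> c g) \<Longrightarrow> g \<in> S"
  using cs unfolding closed_subsurface_def in_Fij_def by blast

lemma c'_app: "c' f = (if f \<in> S then swap_pigments 1 2 (c f) else c f)"
  unfolding c'_def kempe_move_def by simp

lemma B1:
  assumes b: "b \<in> bindings F" and f: "f \<in> sheets F b"
  shows "c' f = (if b \<in> Sb then swap_pigments 1 2 (c f) else c f)"
proof (cases "b \<in> Sb")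
  case True
  then obtain g where g: "g \<in> sheets F b" "g \<in> S" unfolding Sb_def by blast
  show ?thesis
  proof (cases "(1 \<in> c f) \<noteq> (2 \<in> c f)")
    case True
    then have "f \<in> S" using S_clos[OF b g(1) f g(2)] by blast
    then show ?thesis using \<open>b \<in> Sb\<close> by (simp add: c'_app)
  next
    case False
    then have "f \<notin> S" using S_F12 by blast
    then show ?thesis using \<open>b \<in> Sb\<close> False swap_id[of "c f"] by (simp add: c'_app)
  qed
next
  case False
  then have "f \<notin> S" using b f unfolding Sb_def by blast
  then show ?thesis using False by (simp add: c'_app)
qed

lemma N2: "2 \<le> N" using k3 kN by simp

lemma coloring_c': "coloring N F c'"
  unfolding coloring_def
proof (intro conjI ballI)
  fix f assume f: "f \<in> facets F"
  have cf: "c f \<subseteq> {1..N}" "card (c f) = lab F f" using col f unfolding coloring_def by blast+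
  have inj: "inj sw" by (metis injI sw_sw)
  have sub: "sw ` c f \<subseteq> {1..N}" using cf(1) N2 unfolding sw_def by auto
  have "card (sw ` c f) = card (c f)" using inj by (simp add: card_image inj_on_subset)
  then show "c' f \<subseteq> {1..N}" "card (c' f) = lab F f" using cf sub unfolding c'_app swap_sw by auto
next
  fix b assume b: "b \<in> bindings F"
  have sh: "sm1 F b \<in> sheets F b" "sm2 F b \<in> sheets F b" "big F b \<in> sheets F b" unfolding sheets_def by auto
  have u: "c (sm1 F b) \<union> c (sm2 F b) = c (big F b)" using col b unfolding coloring_def by blast
  show "c' (sm1 F b) \<union> c' (sm2 F b) = c' (big F b)"
    using B1[OF b sh(1)] B1[OF b sh(2)] B1[OF b sh(3)] u unfolding swap_sw by (simp add: image_Un[symmetric])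
qed

lemma link:
  assumes v: "v \<in> verts F" and vv: "vs v" and i: "i \<in> {1..4}" and f: "f \<in> sheets F (fst (slot F v i))"
  shows "f \<in> S \<or> (1 \<in> c f \<longleftrightarrow> 2 \<in> c f)"
proof -
  define b1 b2 b3 b4 where "b1 = fst (slot F v 1)" "b2 = fst (slot F v 2)"
    "b3 = fst (slot F v 3)" "b4 = fst (slot F v 4)"
  have bs: "b1 \<in> bindings F" "b2 \<in> bindings F" "b3 \<in> bindings F" "b4 \<in> bindings F"
    unfolding b1_b2_b3_b4_def using slot_in(1)[OF v] by auto
  have sp: "sm1 F b2 = big F b1" "sm1 F b3 = sm2 F b1" "sm2 F b3 = sm2 F b2"
        "sm1 F b4 = sm1 F b1" "sm2 F b4 = big F b3" "big F b4 = big F b2"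
    using spok[OF v] unfolding singular_point_ok_def b1_b2_b3_b4_def Let_def by blast+
  define fa fb fab fc fabc fbc where "fa = sm1 F b1" "fb = sm2 F b1" "fab = big F b1"
    "fc = sm2 F b2" "fabc = big F b2" "fbc = big F b3"
  have sh: "sheets F b1 = {fa, fb, fab}" "sheets F b2 = {fab, fc, fabc}" "sheets F b3 = {fb, fc, fbc}"
     "sheets F b4 = {fa, fbc, fabc}"
    unfolding sheets_def fa_fb_fab_fc_fabc_fbc_def using sp by auto
  define A B C where "A = c fa" "B = c fb" "C = c fc"
  note d1 = disj[OF col bs(1)] and d2 = disj[OF col bs(2)] and d3 = disj[OF col bs(3)]
  have AB: "A \<inter> B = {}" using d1 unfolding A_B_C_def fa_fb_fab_fc_fabc_fbc_def by simp
  have ABC: "(A \<union> B) \<inter> C = {}" using d2 sp d1 unfolding A_B_C_def fa_fb_fab_fc_fabc_fbc_def by simp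
  have cc: "c fab = A \<union> B" "c fabc = A \<union> B \<union> C" "c fbc = B \<union> C"
    using d1 d2 d3 sp unfolding A_B_C_def fa_fb_fab_fc_fabc_fbc_def by auto
  have F12: "\<And>x. x \<in> S \<Longrightarrow> (1 \<in> c x) \<noteq> (2 \<in> c x)" using S_F12 by blast
  have cl1: "\<And>x y. x \<in> {fa, fb, fab} \<Longrightarrow> y \<in> {fa, fb, fab} \<Longrightarrow> x \<in> S \<Longrightarrow> (1 \<in> c y) \<noteq> (2 \<in> c y) \<Longrightarrow> y \<in> S"
    using S_clos[OF bs(1)] sh(1) by blast
  have cl2: "\<And>x y. x \<in> {fab, fc, fabc} \<Longrightarrow> y \<in> {fab, fc, fabc} \<Longrightarrow> x \<in> S \<Longrightarrow> (1 \<in> c y) \<noteq> (2 \<in> c y) \<Longrightarrow> y \<in> S"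
    using S_clos[OF bs(2)] sh(2) by blast
  have cl3: "\<And>x y. x \<in> {fb, fc, fbc} \<Longrightarrow> y \<in> {fb, fc, fbc} \<Longrightarrow> x \<in> S \<Longrightarrow> (1 \<in> c y) \<noteq> (2 \<in> c y) \<Longrightarrow> y \<in> S"
    using S_clos[OF bs(3)] sh(3) by blast
  have cl4: "\<And>x y. x \<in> {fa, fbc, fabc} \<Longrightarrow> y \<in> {fa, fbc, fabc} \<Longrightarrow> x \<in> S \<Longrightarrow> (1 \<in> c y) \<noteq> (2 \<in> c y) \<Longrightarrow> y \<in> S"
    using S_clos[OF bs(4)] sh(4) by blast
  obtain i0 where i0: "i0 \<in> {1..4}" "fst (slot F v i0) \<in> Sb" using vv unfolding vs_def by blast
  have "\<exists>x\<in>{fa, fb, fab, fc, fabc, fbc}. x \<in> S"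
  proof -
    obtain g where g: "g \<in> sheets F (fst (slot F v i0))" "g \<in> S" using i0(2) unfolding Sb_def by blast
    have "i0 = 1 \<or> i0 = 2 \<or> i0 = 3 \<or> i0 = 4" using i0(1) four by blast
    then have "g \<in> {fa, fb, fab, fc, fabc, fbc}" using g(1) sh unfolding b1_b2_b3_b4_def by auto
    then show ?thesis using g(2) by blast
  qed
  then obtain x where x: "x \<in> {fa, fb, fab, fc, fabc, fbc}" "x \<in> S" by blast
  have dis: "\<not> (q \<in> A \<and> q \<in> B)" "\<not> (q \<in> A \<and> q \<in> C)" "\<not> (q \<in> B \<and> q \<in> C)" for q
    using AB ABC by blast+
  have clos: "(\<exists>x\<in>sheets F b. x \<in> S) \<longrightarrow> (\<forall>y\<in>sheets F b. (1 \<in> c y) \<noteq> (2 \<in> c y) \<longrightarrow> y \<in> S)"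
    if "b \<in> bindings F" for b using S_clos[OF that] by blast
  have P1: "(fa \<in> S \<or> fb \<in> S \<or> fab \<in> S) \<longrightarrow> (((1 \<in> c fa) \<noteq> (2 \<in> c fa) \<longrightarrow> fa \<in> S) \<and> ((1 \<in> c fb) \<noteq> (2 \<in> c fb) \<longrightarrow> fb \<in> S)
      \<and> ((1 \<in> c fab) \<noteq> (2 \<in> c fab) \<longrightarrow> fab \<in> S))"
    using clos[OF bs(1)] unfolding sh(1) by blast
  have P2: "(fab \<in> S \<or> fc \<in> S \<or> fabc \<in> S) \<longrightarrow> (((1 \<in> c fab) \<noteq> (2 \<in> c fab) \<longrightarrow> fab \<in> S) \<and> ((1 \<in> c fc) \<noteq> (2 \<in> c fc) \<longrightarrow> fc \<in> S)
      \<and> ((1 \<in> c fabc) \<noteq> (2 \<in> c fabc) \<longrightarrow> fabc \<in> S))"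
    using clos[OF bs(2)] unfolding sh(2) by blast
  have P3: "(fb \<in> S \<or> fc \<in> S \<or> fbc \<in> S) \<longrightarrow> (((1 \<in> c fb) \<noteq> (2 \<in> c fb) \<longrightarrow> fb \<in> S) \<and> ((1 \<in> c fc) \<noteq> (2 \<in> c fc) \<longrightarrow> fc \<in> S)
      \<and> ((1 \<in> c fbc) \<noteq> (2 \<in> c fbc) \<longrightarrow> fbc \<in> S))"
    using clos[OF bs(3)] unfolding sh(3) by blast
  have P4: "(fa \<in> S \<or> fbc \<in> S \<or> fabc \<in> S) \<longrightarrow> (((1 \<in> c fa) \<noteq> (2 \<in> c fa) \<longrightarrow> fa \<in> S) \<and> ((1 \<in> c fbc) \<noteq> (2 \<in> c fbc) \<longrightarrow> fbc \<in> S)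
      \<and> ((1 \<in> c fabc) \<noteq> (2 \<in> c fabc) \<longrightarrow> fabc \<in> S))"
    using clos[OF bs(4)] unfolding sh(4) by blast
  have sA: "fa \<in> S \<longrightarrow> (1 \<in> c fa) \<noteq> (2 \<in> c fa)" "fb \<in> S \<longrightarrow> (1 \<in> c fb) \<noteq> (2 \<in> c fb)"
      "fc \<in> S \<longrightarrow> (1 \<in> c fc) \<noteq> (2 \<in> c fc)" "fab \<in> S \<longrightarrow> (1 \<in> c fab) \<noteq> (2 \<in> c fab)"
      "fabc \<in> S \<longrightarrow> (1 \<in> c fabc) \<noteq> (2 \<in> c fabc)" "fbc \<in> S \<longrightarrow> (1 \<in> c fbc) \<noteq> (2 \<in> c fbc)"
    using F12 by blast+
  have mem: "q \<in> c fa \<longleftrightarrow> q \<in> A" "q \<in> c fb \<longleftrightarrow> q \<in> B" "q \<in> c fc \<longleftrightarrow> q \<in> C"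
    "q \<in> c fab \<longleftrightarrow> q \<in> A \<or> q \<in> B" "q \<in> c fabc \<longleftrightarrow> q \<in> A \<or> q \<in> B \<or> q \<in> C"
    "q \<in> c fbc \<longleftrightarrow> q \<in> B \<or> q \<in> C" for q
    using cc unfolding A_B_C_def by auto
  have x': "fa \<in> S \<or> fb \<in> S \<or> fab \<in> S \<or> fc \<in> S \<or> fabc \<in> S \<or> fbc \<in> S" using x by blast
  have allp: "((1 \<in> c fa) \<noteq> (2 \<in> c fa) \<longrightarrow> fa \<in> S) \<and> ((1 \<in> c fb) \<noteq> (2 \<in> c fb) \<longrightarrow> fb \<in> S) \<and> ((1 \<in> c fc) \<noteq> (2 \<in> c fc) \<longrightarrow> fc \<in> S)
     \<and> ((1 \<in> c fab) \<noteq> (2 \<in> c fab) \<longrightarrow> fab \<in> S)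
     \<and> ((1 \<in> c fabc) \<noteq> (2 \<in> c fabc) \<longrightarrow> fabc \<in> S)
     \<and> ((1 \<in> c fbc) \<noteq> (2 \<in> c fbc) \<longrightarrow> fbc \<in> S)"
    using dis[of 1] dis[of 2] mem[of 1] mem[of 2] sA P1 P2 P3 P4 x' by argo
  have all: "\<forall>y\<in>{fa, fb, fab, fc, fabc, fbc}. y \<in> S \<or> (1 \<in> c y \<longleftrightarrow> 2 \<in> c y)"
    using allp by blast
  have "i = 1 \<or> i = 2 \<or> i = 3 \<or> i = 4" using i four by blast
  then have "f \<in> {fa, fb, fab, fc, fabc, fbc}" using f sh unfolding b1_b2_b3_b4_def by auto
  then show ?thesis using all by blast
qed


lemma V1:
  assumes v: "v \<in> verts F" and i: "i \<in> {1..4}" and f: "f \<in> sheets F (fst (slot F v i))"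
  shows "c' f = (if vs v then swap_pigments 1 2 (c f) else c f)"
proof (cases "vs v")
  case True
  have "f \<in> S \<or> (1 \<in> c f \<longleftrightarrow> 2 \<in> c f)" by (rule link[OF v True i f])
  then show ?thesis
  proof
    assume "f \<in> S" then show ?thesis using True by (simp add: c'_app)
  next
    assume a: "1 \<in> c f \<longleftrightarrow> 2 \<in> c f"
    then have "f \<notin> S" using S_F12 by blast
    then show ?thesis using True swap_id[OF a] by (simp add: c'_app)
  qed
next
  case False
  then have "fst (slot F v i) \<notin> Sb" using i unfolding vs_def by blast
  then show ?thesis using B1[OF slot_in(1)[OF v i] f] False by simp
qed

lemma V2:
  assumes v: "v \<in> verts F" and i: "i \<in> {1..4}" and nn: "\<not> neutral (fst (slot F v i))"
  shows "fst (slot F v i) \<in> Sb \<longleftrightarrow> vs v"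
proof
  assume "fst (slot F v i) \<in> Sb" then show "vs v" unfolding vs_def using i by blast
next
  assume vv: "vs v"
  show "fst (slot F v i) \<in> Sb"
  proof (rule ccontr)
    assume nS: "fst (slot F v i) \<notin> Sb"
    obtain f where f: "f \<in> sheets F (fst (slot F v i))" "(1 \<in> c f) \<noteq> (2 \<in> c f)"
      using nn unfolding neutral_def by blast
    have "c' f = swap_pigments 1 2 (c f)" using V1[OF v i f(1)] vv by simp
    moreover have "c' f = c f" using B1[OF slot_in(1)[OF v i] f(1)] nS by simp
    ultimately have "swap_pigments 1 2 (c f) = c f" by simp
    then have "1 \<in> c f \<longleftrightarrow> 2 \<in> c f" unfolding set_eq_iff mem_swap by (metis sw_def)
    then show False using f(2) by simp
  qed
qed

lemma k_ne: "k \<noteq> 1" "k \<noteq> 2" "1 \<noteq> k" "2 \<noteq> k" using k3 by auto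

lemma NT:
  assumes b: "b \<in> bindings F" and n: "neutral b"
  shows "b \<notin> Sb" "triple_binding F c 1 k b \<longleftrightarrow> triple_binding F c 2 k b"
    "positive_binding F c 1 k b \<longleftrightarrow> positive_binding F c 2 k b"
proof -
  have sh: "sm1 F b \<in> sheets F b" "sm2 F b \<in> sheets F b" "big F b \<in> sheets F b" unfolding sheets_def by auto
  have m: "1 \<in> c (sm1 F b) \<longleftrightarrow> 2 \<in> c (sm1 F b)" "1 \<in> c (sm2 F b) \<longleftrightarrow> 2 \<in> c (sm2 F b)"
    "1 \<in> c (big F b) \<longleftrightarrow> 2 \<in> c (big F b)" using n sh unfolding neutral_def by blast+
  show "b \<notin> Sb" using n S_F12 unfolding Sb_def neutral_def by blast
  show "triple_binding F c 1 k b \<longleftrightarrow> triple_binding F c 2 k b"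
    using trip_iff[OF col b k_ne(3)] trip_iff[OF col b k_ne(4)] m by simp
  show "positive_binding F c 1 k b \<longleftrightarrow> positive_binding F c 2 k b"
    using pos_iff[OF col b] m by simp
qed

lemma transfer:
  assumes h: "\<And>f. f \<in> sheets F b \<Longrightarrow> col2 f = (if fl then swap_pigments 1 2 (col f) else col f)"
  shows "triple_binding F col2 j k b \<longleftrightarrow> triple_binding F col (pi fl j) k b"
    "positive_binding F col2 j k b \<longleftrightarrow> positive_binding F col (pi fl j) k b"
proof -
  have sh: "sm1 F b \<in> sheets F b" "sm2 F b \<in> sheets F b" "big F b \<in> sheets F b" unfolding sheets_def by auto
  have mm: "x \<in> col2 f \<longleftrightarrow> pi fl x \<in> col f" if "f \<in> sheets F b" for x f
    using h[OF that] mem_swap[of x "col f"] unfolding pi_def by (cases fl) simp_all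
  have pk: "pi fl k = k" unfolding pi_def using sw_k[OF k3] by simp
  note m1 = mm[OF sh(1)] and m2 = mm[OF sh(2)] and m3 = mm[OF sh(3)]
  show "triple_binding F col2 j k b \<longleftrightarrow> triple_binding F col (pi fl j) k b"
    unfolding triple_binding_def sheets_def in_Fi_def in_Fij_def using m1 m2 m3 pk by simp
  show "positive_binding F col2 j k b \<longleftrightarrow> positive_binding F col (pi fl j) k b"
    unfolding positive_binding_def using m1 m2 m3 pk by simp
qed

lemma transB:
  assumes b: "b \<in> bindings F"
  shows "triple_binding F c' j k b \<longleftrightarrow> triple_binding F c (pi (b \<in> Sb) j) k b"
    "positive_binding F c' j k b \<longleftrightarrow> positive_binding F c (pi (b \<in> Sb) j) k b"
  using transfer[of b c' "b \<in> Sb" c] B1[OF b] by blast+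

lemma transV:
  assumes v: "v \<in> verts F" and i: "i \<in> {1..4}"
  shows "triple_binding F c' j k (fst (slot F v i)) \<longleftrightarrow> triple_binding F c (pi (vs v) j) k (fst (slot F v i))"
    "positive_binding F c' j k (fst (slot F v i)) \<longleftrightarrow> positive_binding F c (pi (vs v) j) k (fst (slot F v i))"
  using transfer[of "fst (slot F v i)" c' "vs v" c] V1[OF v i] by blast+

lemma nxt_trans:
  assumes b: "b \<in> bindings F"
  shows "nxt c' j b = nxt c (pi (vs (fst (epos b True))) j) b"
proof (cases "circ F b")
  case True then show ?thesis unfolding nxt_def by simp
next
  case False
  define v where "v = fst (epos b True)"
  have vV: "v \<in> verts F" using epos(1)[OF b False, of True] unfolding v_def by auto
  have "tslot c' j v e = tslot c (pi (vs v) j) v e" for e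
  proof -
    have "(\<lambda>i. i \<in> {1..4} \<and> triple_binding F c' j k (fst (slot F v i)) \<and> snd (slot F v i) = e)
        = (\<lambda>i. i \<in> {1..4} \<and> triple_binding F c (pi (vs v) j) k (fst (slot F v i)) \<and> snd (slot F v i) = e)"
      using transV(1)[OF vV] by blast
    then show ?thesis unfolding tslot_def by simp
  qed
  then show ?thesis unfolding nxt_def v_def[symmetric] using False by simp
qed

end

lemma pi_pi2: "pi a (pi b j) = pi (a \<noteq> b) j" unfolding pi_def by auto

lemma swp_pi: "swp M (b, j) = (b, pi (b \<in> M) j)" unfolding swp_def pi_def by simp

lemma pi_12': "pi fl j = 1 \<or> pi fl j = 2 \<longleftrightarrow> j = 1 \<or> j = 2" unfolding pi_def sw_def by auto

context kempe
begin

definition D where "D col = (\<lambda>b. (b, 1::nat)) ` Pset col 1 \<union> (\<lambda>b. (b, 2)) ` Pset col 2"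
definition Sig where "Sig col x = (if snd x = 1 \<or> snd x = 2 then (sig col (snd x) (fst x), snd x) else x)"

lemma memD: "(b, j) \<in> D col \<longleftrightarrow> (j = 1 \<or> j = 2) \<and> b \<in> Pset col j"
  unfolding D_def by auto

lemma finD: "finite (D col)" unfolding D_def using fin_P by simp

lemma Sig_perm:
  assumes cl: "coloring N F col"
  shows "Sig col permutes D col"
proof (rule inj_imp_permutes)
  note p1 = sig_perm[OF cl k_ne(3)] and p2 = sig_perm[OF cl k_ne(4)]
  show "finite (D col)" by (rule finD)
  show "inj_on (Sig col) (D col)"
  proof (rule inj_onI)
    fix x y assume xy: "x \<in> D col" "y \<in> D col" "Sig col x = Sig col y"
    obtain b j b' j' where e: "x = (b,j)" "y = (b',j')" by fastforce
    have j: "j = 1 \<or> j = 2" "j' = 1 \<or> j' = 2" using xy(1,2) unfolding e memD by blast+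
    then have "j = j'" "sig col j b = sig col j b'" using xy(3) unfolding e Sig_def by auto
    then have "b = b'" using j(1) permutes_inj[OF p1] permutes_inj[OF p2] by (auto dest: injD)
    then show "x = y" using e \<open>j = j'\<close> by simp
  qed
  show "Sig col x \<in> D col" if "x \<in> D col" for x
  proof -
    obtain b j where e: "x = (b,j)" by fastforce
    have j: "(j = 1 \<or> j = 2) \<and> b \<in> Pset col j" using that unfolding e memD .
    then have "sig col j b \<in> Pset col j" using permutes_in_image[OF p1] permutes_in_image[OF p2] by auto
    then show ?thesis using j unfolding e Sig_def by (auto simp: memD)
  qed
  show "Sig col x = x" if "x \<notin> D col" for x
  proof -
    obtain b j where e: "x = (b,j)" by fastforce
    show ?thesis
    proof (cases "j = 1 \<or> j = 2")
      case True
      then have "b \<notin> Pset col j" using that unfolding e memD by blast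
      then have "sig col j b = b" using True permutes_not_in[OF p1] permutes_not_in[OF p2] by auto
      then show ?thesis unfolding e Sig_def by simp
    next
      case False then show ?thesis unfolding e Sig_def by simp
    qed
  qed
qed

lemma ncyc_D:
  assumes cl: "coloring N F col"
  shows "ncyc (D col) (Sig col) = theta_plus F col 1 k + theta_plus F col 2 k"
proof -
  note p1 = sig_perm[OF cl k_ne(3)] and p2 = sig_perm[OF cl k_ne(4)]
  have u: "ncyc (D col) (Sig col) = ncyc ((\<lambda>b. (b, 1::nat)) ` Pset col 1) (Sig col) + ncyc ((\<lambda>b. (b, 2::nat)) ` Pset col 2) (Sig col)"
    unfolding D_def
  proof (rule ncyc_union)
    show "finite ((\<lambda>b. (b, 1::nat)) ` Pset col 1)" "finite ((\<lambda>b. (b, 2::nat)) ` Pset col 2)" using fin_P by auto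
    show "(\<lambda>b. (b, 1::nat)) ` Pset col 1 \<inter> (\<lambda>b. (b, 2)) ` Pset col 2 = {}" by auto
    show "Sig col x \<in> (\<lambda>b. (b, 1::nat)) ` Pset col 1" if "x \<in> (\<lambda>b. (b, 1::nat)) ` Pset col 1" for x
      using that permutes_in_image[OF p1] unfolding Sig_def by auto
    show "Sig col x \<in> (\<lambda>b. (b, 2::nat)) ` Pset col 2" if "x \<in> (\<lambda>b. (b, 2::nat)) ` Pset col 2" for x
      using that permutes_in_image[OF p2] unfolding Sig_def by auto
  qed
  have a: "ncyc ((\<lambda>b. (b, 1::nat)) ` Pset col 1) (Sig col) = ncyc (Pset col 1) (sig col 1)"
    by (rule ncyc_inj_image) (auto simp: inj_def Sig_def)
  have b: "ncyc ((\<lambda>b. (b, 2::nat)) ` Pset col 2) (Sig col) = ncyc (Pset col 2) (sig col 2)"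
    by (rule ncyc_inj_image) (auto simp: inj_def Sig_def)
  show ?thesis using u a b theta_ncyc[OF cl k_ne(3)] theta_ncyc[OF cl k_ne(4)] by simp
qed

definition NH where "NH = {b \<in> Pset c 1. neutral b \<and> \<not> circ F b \<and> vs (fst (epos b True))}"
definition NTl where "NTl = {b \<in> Pset c 1. neutral b \<and> \<not> circ F b \<and> vs (fst (epos b False))}"

lemma finNH: "finite NH" "finite NTl" unfolding NH_def NTl_def using fin_P by auto

lemma Pset_neutral:
  assumes "neutral b" "j = 1 \<or> j = 2"
  shows "b \<in> Pset c j \<longleftrightarrow> b \<in> Pset c 1"
  using assms NT(3)[of b] unfolding Pset_def by auto

lemma memD':
  "x \<in> D c' \<longleftrightarrow> swp Sb x \<in> D c"
proof -
  obtain b j where e: "x = (b,j)" by fastforce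
  show ?thesis
  proof (cases "b \<in> bindings F")
    case True
    show ?thesis unfolding e swp_pi memD pi_12' Pset_def using transB(2)[OF True] True by auto
  next
    case False
    then show ?thesis unfolding e swp_pi memD Pset_def by auto
  qed
qed

lemma main_eq:
  "swp Sb \<circ> Sig c' \<circ> swp Sb = swp NTl \<circ> Sig c \<circ> swp NH"
proof
  fix x :: "'b \<times> nat"
  obtain b j where e: "x = (b,j)" by fastforce
  have c'col: "coloring N F c'" by (rule coloring_c')
  note pc = Sig_perm[OF col] and pc' = Sig_perm[OF c'col]
  show "(swp Sb \<circ> Sig c' \<circ> swp Sb) x = (swp NTl \<circ> Sig c \<circ> swp NH) x"
  proof (cases "x \<in> D c")
    case False
    have "swp Sb x \<notin> D c'" using False memD'[of "swp Sb x"] by simp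
    then have l: "(swp Sb \<circ> Sig c' \<circ> swp Sb) x = x" using permutes_not_in[OF pc'] by simp
    have nh: "swp M x = x" if "M \<subseteq> {b. neutral b \<and> b \<in> Pset c 1}" for M
    proof (cases "b \<in> M")
      case True
      then have "neutral b" "b \<in> Pset c 1" using that by auto
      then have "b \<in> Pset c 1" "b \<in> Pset c 2" using Pset_neutral[of b 2] by auto
      then have "j \<noteq> 1" "j \<noteq> 2" using False unfolding e memD by auto
      then show ?thesis unfolding e swp_pi pi_def sw_def by simp
    next
      case False then show ?thesis unfolding e swp_pi by simp
    qed
    have "NH \<subseteq> {b. neutral b \<and> b \<in> Pset c 1}" "NTl \<subseteq> {b. neutral b \<and> b \<in> Pset c 1}"
      unfolding NH_def NTl_def by auto
    then have "(swp NTl \<circ> Sig c \<circ> swp NH) x = x" using nh permutes_not_in[OF pc False] by simp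
    then show ?thesis using l by simp
  next
    case True
    have j: "j = 1 \<or> j = 2" and bP: "b \<in> Pset c j" using True unfolding e memD by blast+
    have bB: "b \<in> bindings F" using bP unfolding Pset_def by blast
    define fl where "fl = (b \<in> Sb)"
    have jfl: "pi fl j = 1 \<or> pi fl j = 2" using j pi_12' by blast
    have bP': "b \<in> Pset c' (pi fl j)"
      using bP transB(2)[OF bB, of "pi fl j"] bB unfolding Pset_def fl_def by simp
    have l1: "(swp Sb \<circ> Sig c' \<circ> swp Sb) x = swp Sb (nxt c' (pi fl j) b, pi fl j)"
      unfolding e using bP' jfl by (simp add: swp_pi fl_def Sig_def sig_def)
    show ?thesis
    proof (cases "circ F b")
      case True
      have "nxt c' (pi fl j) b = b" "nxt c j b = b" using True unfolding nxt_def by simp_all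
      moreover have "b \<notin> NH" "b \<notin> NTl" using True unfolding NH_def NTl_def by auto
      ultimately show ?thesis using l1 bP j unfolding e by (simp add: swp_pi fl_def Sig_def sig_def)
    next
      case nc: False
      define v where "v = fst (epos b True)"
      define i where "i = snd (epos b True)"
      have vV: "v \<in> verts F" and iI: "i \<in> {1..4}" using epos(1)[OF bB nc, of True] unfolding v_def i_def by auto
      have sl: "slot F v i = (b, True)" using epos(2)[OF bB nc, of True] unfolding v_def i_def .
      define hv where "hv = vs v"
      have nx: "nxt c' (pi fl j) b = nxt c (pi hv (pi fl j)) b" unfolding hv_def v_def by (rule nxt_trans[OF bB])
      have E1: "(hv \<noteq> fl) = (b \<in> NH)"
      proof (cases "neutral b")
        case True
        then have "\<not> fl" using NT(1)[OF bB] unfolding fl_def by blast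
        moreover have "b \<in> Pset c 1" using Pset_neutral[OF True j] bP by blast
        ultimately show ?thesis using True nc unfolding NH_def hv_def v_def by auto
      next
        case False
        have "fl = hv" using V2[OF vV iI] sl False unfolding fl_def hv_def by simp
        then show ?thesis using False unfolding NH_def by auto
      qed
      define j2 where "j2 = pi (b \<in> NH) j"
      have j2e: "pi hv (pi fl j) = j2" unfolding j2_def pi_pi2 using E1 by simp
      have j2j: "j2 = 1 \<or> j2 = 2" unfolding j2_def using j pi_12' by blast
      have bP2: "b \<in> Pset c j2"
      proof (cases "b \<in> NH")
        case True
        then have "neutral b" "b \<in> Pset c 1" unfolding NH_def by auto
        then show ?thesis using Pset_neutral[of b j2] j2j by blast
      next
        case False then show ?thesis unfolding j2_def using bP by simp
      qed
      have bb2: "b \<in> bindings F" "positive_binding F c j2 k b" using bP2 unfolding Pset_def by auto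
      have j2k: "j2 \<noteq> k" using j2j k_ne by auto
      have tb2: "triple_binding F c j2 k b" using pos_trip[OF col bb2(1) j2k bb2(2)] .
      define b' where "b' = nxt c j2 b"
      have r1: "(swp NTl \<circ> Sig c \<circ> swp NH) x = swp NTl (b', j2)"
        unfolding e b'_def j2_def using bP2 j2j unfolding j2_def by (simp add: swp_pi Sig_def sig_def)
      have l2: "(swp Sb \<circ> Sig c' \<circ> swp Sb) x = swp Sb (b', pi fl j)"
        using l1 nx j2e unfolding b'_def by simp
      note nf = nxt_facts[OF col j2k bB nc tb2]
      have b'B: "b' \<in> bindings F" "\<not> circ F b'" using nf(1,2) unfolding b'_def by auto
      have b'P: "b' \<in> Pset c j2" unfolding b'_def using nxt_in_P(1)[OF col j2k bP2] .
      define i' where "i' = tslot c j2 v False"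
      have ep': "epos b' False = (v, i')" unfolding b'_def i'_def v_def using nf(4) .
      have i'I: "i' \<in> {1..4}" and sl': "slot F v i' = (b', False)"
        using epos[OF b'B, of False] ep' by auto
      have E2: "((b' \<in> Sb) \<noteq> fl) = ((b' \<in> NTl) \<noteq> (b \<in> NH))"
      proof (cases "neutral b'")
        case True
        have "b' \<notin> Sb" using NT(1)[OF b'B(1) True] .
        moreover have "b' \<in> Pset c 1" using Pset_neutral[OF True j2j] b'P by blast
        moreover have "\<not> circ F b'" using b'B(2) .
        ultimately have "b' \<in> NTl \<longleftrightarrow> hv" using True ep' unfolding NTl_def hv_def by auto
        then show ?thesis using \<open>b' \<notin> Sb\<close> E1 by auto
      next
        case False
        have "b' \<in> Sb \<longleftrightarrow> hv" using V2[OF vV i'I] sl' False unfolding hv_def by simp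
        moreover have "b' \<notin> NTl" using False unfolding NTl_def by auto
        ultimately show ?thesis using E1 by auto
      qed
      show ?thesis using l2 r1 E2 unfolding swp_pi j2_def by (simp add: pi_pi2)
    qed
  qed
qed

end

context kempe
begin

lemma pos_slots_even:
  assumes v: "v \<in> verts F"
  shows "even (card {i\<in>{1..4}. fst (slot F v i) \<in> Pset c 1})"
proof -
  define q where "q i = positive_binding F c 1 k (fst (slot F v i))" for i
  define t where "t i = triple_binding F c 1 k (fst (slot F v i))" for i
  have qt: "q i \<longrightarrow> t i" if "i \<in> {1..4}" for i
    using pos_trip[OF col slot_in(1)[OF v that] k_ne(3)] unfolding q_def t_def by blast
  have qt4: "q 1 \<longrightarrow> t 1" "q 2 \<longrightarrow> t 2" "q 3 \<longrightarrow> t 3" "q 4 \<longrightarrow> t 4" using qt by auto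
  have L: "(\<not> t 1 \<and> \<not> t 2 \<and> \<not> t 3 \<and> \<not> t 4) \<or>
         ((t 1 \<noteq> t 2) \<and> (t 3 \<noteq> t 4) \<and> (t 1 \<longrightarrow> t 3 \<longrightarrow> (q 1 \<longleftrightarrow> q 3)) \<and>
          (t 1 \<longrightarrow> t 4 \<longrightarrow> (q 1 \<longleftrightarrow> q 4)) \<and> (t 2 \<longrightarrow> t 3 \<longrightarrow> (q 2 \<longleftrightarrow> q 3)) \<and>
          (t 2 \<longrightarrow> t 4 \<longrightarrow> (q 2 \<longleftrightarrow> q 4)))"
    unfolding t_def q_def by (rule LL[OF col v k_ne(3)])
  have c1: "\<not> (q 1 \<and> q 2)" "\<not> (q 3 \<and> q 4)" "(q 1 \<or> q 2) \<longleftrightarrow> (q 3 \<or> q 4)"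
    using L qt4 by argo+
  have eq: "{i\<in>{1..4}. fst (slot F v i) \<in> Pset c 1} = {i\<in>{1..4}. q i}"
    using slot_in(1)[OF v] unfolding q_def Pset_def by auto
  have s: "{i\<in>{1..4}. q i} = {i\<in>{1,2}. q i} \<union> {i\<in>{3,4}. q i}" by auto
  have d: "{i\<in>{1,2::nat}. q i} \<inter> {i\<in>{3,4}. q i} = {}" by auto
  have a: "card {i\<in>{1,2::nat}. q i} = (if q 1 \<or> q 2 then 1 else 0)"
  proof (cases "q 1")
    case True
    then have "{i\<in>{1,2::nat}. q i} = {1}" using c1(1) by auto
    then show ?thesis using True by simp
  next
    case False
    show ?thesis
    proof (cases "q 2")
      case True
      then have "{i\<in>{1,2::nat}. q i} = {2}" using False by auto
      then show ?thesis using True by simp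
    next
      case f2: False
      then have "{i\<in>{1,2::nat}. q i} = {}" using False by auto
      then show ?thesis using f2 False by simp
    qed
  qed
  have b: "card {i\<in>{3,4::nat}. q i} = (if q 3 \<or> q 4 then 1 else 0)"
  proof (cases "q 3")
    case True
    then have "{i\<in>{3,4::nat}. q i} = {3}" using c1(2) by auto
    then show ?thesis using True by simp
  next
    case False
    show ?thesis
    proof (cases "q 4")
      case True
      then have "{i\<in>{3,4::nat}. q i} = {4}" using False by auto
      then show ?thesis using True by simp
    next
      case f2: False
      then have "{i\<in>{3,4::nat}. q i} = {}" using False by auto
      then show ?thesis using f2 False by simp
    qed
  qed
  have "card {i\<in>{1..4}. q i} = card {i\<in>{1,2::nat}. q i} + card {i\<in>{3,4}. q i}"
    unfolding s by (rule card_Un_disjoint) (use d in auto)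
  then show ?thesis unfolding eq using a b c1(3) by simp
qed

lemma ends_even: "even (card NH + card NTl)"
proof -
  define W where "W = Sigma {v \<in> verts F. vs v} (\<lambda>v. {i\<in>{1..4}. fst (slot F v i) \<in> Pset c 1})"
  have fW: "finite W" unfolding W_def using fin_v by auto
  have "card W = (\<Sum>v\<in>{v \<in> verts F. vs v}. card {i\<in>{1..4}. fst (slot F v i) \<in> Pset c 1})"
    unfolding W_def by (rule card_SigmaI) (use fin_v in auto)
  moreover have "even (\<Sum>v\<in>{v \<in> verts F. vs v}. card {i\<in>{1..4}. fst (slot F v i) \<in> Pset c 1})"
    by (rule dvd_sum) (use pos_slots_even in auto)
  ultimately have eW: "even (card W)" by simp
  have WS: "W \<subseteq> verts F \<times> {1..4}" unfolding W_def by auto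
  have inj: "inj_on (\<lambda>(v,i). slot F v i) W"
    using ebij WS unfolding bij_betw_def by (meson inj_on_subset)
  define H where "H = {b \<in> Pset c 1. \<not> circ F b \<and> vs (fst (epos b True))}"
  define T where "T = {b \<in> Pset c 1. \<not> circ F b \<and> vs (fst (epos b False))}"
  have img: "(\<lambda>(v,i). slot F v i) ` W = (\<lambda>b. (b, True)) ` H \<union> (\<lambda>b. (b, False)) ` T"
  proof -
    have "(b, e) \<in> (\<lambda>(v,i). slot F v i) ` W \<longleftrightarrow> b \<in> Pset c 1 \<and> \<not> circ F b \<and> vs (fst (epos b e))" for b e
    proof
      assume "(b, e) \<in> (\<lambda>(v,i). slot F v i) ` W"
      then obtain v i where vi: "(v,i) \<in> W" "slot F v i = (b,e)" by auto
      have v: "v \<in> verts F" "i \<in> {1..4}" "vs v" "fst (slot F v i) \<in> Pset c 1" using vi(1) unfolding W_def by auto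
      have "epos b e = (v,i)" by (rule epos_uniq[OF v(1,2) vi(2)])
      moreover have fb: "fst (slot F v i) = b" using vi(2) by simp
      ultimately show "b \<in> Pset c 1 \<and> \<not> circ F b \<and> vs (fst (epos b e))"
        using v(3,4) slot_in(2)[OF v(1,2)] by simp
    next
      assume a: "b \<in> Pset c 1 \<and> \<not> circ F b \<and> vs (fst (epos b e))"
      have bB: "b \<in> bindings F" using a unfolding Pset_def by blast
      have nc: "\<not> circ F b" using a by blast
      note ep = epos[OF bB nc, of e]
      have "epos b e \<in> W"
      proof -
        have "fst (slot F (fst (epos b e)) (snd (epos b e))) = b" using ep(2) by simp
        then have "fst (epos b e) \<in> {v \<in> verts F. vs v}"
          "snd (epos b e) \<in> {i\<in>{1..4}. fst (slot F (fst (epos b e)) i) \<in> Pset c 1}"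
          using ep(1) a by auto
        then have "(fst (epos b e), snd (epos b e)) \<in> W" unfolding W_def by (rule SigmaI)
        then show ?thesis by simp
      qed
      moreover have "(\<lambda>(v,i). slot F v i) (epos b e) = (b,e)" using ep(2) a bB by (simp add: case_prod_beta)
      ultimately show "(b, e) \<in> (\<lambda>(v,i). slot F v i) ` W" by (metis image_eqI)
    qed
    note iff = this
    show ?thesis
    proof (rule set_eqI)
      fix p :: "'b \<times> bool"
      obtain b e where pe: "p = (b, e)" by fastforce
      have r: "(b, e) \<in> (\<lambda>b. (b, True)) ` H \<union> (\<lambda>b. (b, False)) ` T \<longleftrightarrow> (if e then b \<in> H else b \<in> T)"
        by (cases e) (simp_all add: image_iff)
      show "p \<in> (\<lambda>(v,i). slot F v i) ` W \<longleftrightarrow> p \<in> (\<lambda>b. (b, True)) ` H \<union> (\<lambda>b. (b, False)) ` T"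
        unfolding pe r iff by (cases e) (simp_all add: H_def T_def)
    qed
  qed
  have fH: "finite H" "finite T" unfolding H_def T_def using fin_P by auto
  have cU: "card ((\<lambda>b. (b, True)) ` H \<union> (\<lambda>b. (b, False)) ` T) = card H + card T"
  proof -
    have "card ((\<lambda>b. (b, True)) ` H \<union> (\<lambda>b. (b, False)) ` T) = card ((\<lambda>b. (b, True)) ` H) + card ((\<lambda>b. (b, False)) ` T)"
      by (rule card_Un_disjoint) (use fH in auto)
    moreover have "card ((\<lambda>b. (b, True)) ` H) = card H" by (rule card_image) (auto simp: inj_on_def)
    moreover have "card ((\<lambda>b. (b, False)) ` T) = card T" by (rule card_image) (auto simp: inj_on_def)
    ultimately show ?thesis by simp
  qed
  have cW: "card W = card H + card T" using card_image[OF inj] img cU by simp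
  define Hn where "Hn = {b \<in> H. \<not> neutral b}"
  define Tn where "Tn = {b \<in> T. \<not> neutral b}"
  have H1: "H = NH \<union> Hn" "NH \<inter> Hn = {}" unfolding H_def Hn_def NH_def by auto
  have T1: "T = NTl \<union> Tn" "NTl \<inter> Tn = {}" unfolding T_def Tn_def NTl_def by auto
  have HT: "Hn = Tn"
  proof -
    have "vs (fst (epos b True)) \<longleftrightarrow> vs (fst (epos b False))"
      if "b \<in> Pset c 1" "\<not> circ F b" "\<not> neutral b" for b
    proof -
      have bB: "b \<in> bindings F" using that unfolding Pset_def by blast
      have "vs (fst (epos b e)) \<longleftrightarrow> b \<in> Sb" for e
      proof -
        note ep = epos[OF bB that(2), of e]
        have v: "fst (epos b e) \<in> verts F" "snd (epos b e) \<in> {1..4}" using ep(1) by auto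
        show ?thesis using V2[OF v] ep(2) that(3) by simp
      qed
      then show ?thesis by simp
    qed
    then show ?thesis unfolding Hn_def Tn_def H_def T_def by blast
  qed
  have fin2: "finite NH" "finite Hn" "finite NTl" "finite Tn" using fH H1 T1 by auto
  have "card H = card NH + card Hn" using H1 fin2 by (simp add: card_Un_disjoint)
  moreover have "card T = card NTl + card Tn" using T1 fin2 by (simp add: card_Un_disjoint)
  ultimately have "card W = card NH + card NTl + 2 * card Hn" using cW HT by simp
  then show ?thesis using eW by simp
qed

lemma parity:
  "(theta_plus F c 1 k + theta_plus F c 2 k) mod 2 = (theta_plus F c' 1 k + theta_plus F c' 2 k) mod 2"
proof -
  have c'col: "coloring N F c'" by (rule coloring_c')
  note pc = Sig_perm[OF col] and pc' = Sig_perm[OF c'col]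
  have perm: "permutation (Sig c)" "permutation (Sig c')"
    using pc pc' finD permutation_permutes by blast+
  have fSb: "finite Sb" unfolding Sb_def using fin_b by simp
  note s1 = swp_sign[OF fSb] and s2 = swp_sign[OF finNH(1)] and s3 = swp_sign[OF finNH(2)]
  have "sign (swp Sb \<circ> Sig c' \<circ> swp Sb) = sign (swp Sb) * sign (Sig c') * sign (swp Sb)"
    using s1 perm by (simp add: sign_compose permutation_compose)
  also have "\<dots> = sign (Sig c')" by (metis mult.commute mult.left_commute mult.right_neutral sign_idempotent)
  finally have e1: "sign (swp Sb \<circ> Sig c' \<circ> swp Sb) = sign (Sig c')" .
  have "sign (swp NTl \<circ> Sig c \<circ> swp NH) = sign (swp NTl) * sign (Sig c) * sign (swp NH)"
    using s2 s3 perm by (simp add: sign_compose permutation_compose)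
  also have "\<dots> = (-1::int) ^ (card NH + card NTl) * sign (Sig c)"
    using s2 s3 by (simp add: power_add)
  also have "\<dots> = sign (Sig c)" using ends_even by simp
  finally have e2: "sign (swp NTl \<circ> Sig c \<circ> swp NH) = sign (Sig c)" .
  have sg: "sign (Sig c') = sign (Sig c)" using e1 e2 main_eq by simp
  have Dimg: "D c' = swp Sb ` D c"
  proof
    show "D c' \<subseteq> swp Sb ` D c"
    proof
      fix x assume "x \<in> D c'"
      then have "swp Sb x \<in> D c" using memD' by blast
      then show "x \<in> swp Sb ` D c" by (metis image_eqI swp_swp)
    qed
    show "swp Sb ` D c \<subseteq> D c'"
    proof
      fix y assume "y \<in> swp Sb ` D c"
      then obtain x where "x \<in> D c" "y = swp Sb x" by blast
      then show "y \<in> D c'" using memD'[of y] by simp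
    qed
  qed
  have "inj (swp Sb)" by (metis injI swp_swp)
  then have cD: "card (D c') = card (D c)" unfolding Dimg by (simp add: card_image inj_on_subset)
  have "(-1::int) ^ (card (D c) + ncyc (D c) (Sig c)) = (-1) ^ (card (D c) + ncyc (D c') (Sig c'))"
    using sg sign_ncyc[OF finD pc] sign_ncyc[OF finD pc'] cD by simp
  then have "even (card (D c) + ncyc (D c) (Sig c)) = even (card (D c) + ncyc (D c') (Sig c'))"
    by (simp add: minus_one_power_iff split: if_splits)
  then have "even (ncyc (D c) (Sig c)) = even (ncyc (D c') (Sig c'))" by (simp, argo)
  moreover have "x mod 2 = y mod 2" if "even x = even y" for x y :: nat
    using that by (metis odd_iff_mod_2_eq_one even_iff_mod_2_eq_zero)
  ultimately show ?thesis unfolding ncyc_D[OF col] ncyc_D[OF c'col] by blast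
qed

end

theorem lemma2p7:
  fixes F :: "('f,'b,'v) foam" and N k :: nat
    and c c' :: "'f \<Rightarrow> nat set" and S :: "'f set"
  assumes "is_closed_foam N F"
    and "coloring N F c"
    and "closed_subsurface F c 1 2 S"
    and "c' = kempe_move c 1 2 S"
    and "3 \<le> k" and "k \<le> N"
  shows "(theta_plus F c 1 k + theta_plus F c 2 k) mod 2
       = (theta_plus F c' 1 k + theta_plus F c' 2 k) mod 2"
proof -
  interpret K: kempe F N k c S
    by unfold_locales (use assms in auto)
  have "c' = K.c'" using assms(4) unfolding K.c'_def by simp
  then show ?thesis using K.parity by simp
qed

end
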